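(* Let $G = N \rtimes H$ with $N,H$ finite abelian. For each $H$-orbit $\mathcal{O}_\alpha = \{v_1,\dots,v_{c_\alpha}\}$ in $P_N$ with stabilizer $H_\alpha$ and idempotent eigenbasis $\{u^{[\alpha]}_1,\dots,u^{[\alpha]}_{|H_\alpha|}\}$ of $\mathbb{C}[H_\alpha]$, let $J^{[\alpha]}_p = \sum_{i=1}^{c_\alpha} v_iu^{[\alpha]}_p$. Then the set $\{J^{[\alpha]}_p : \alpha \text{ an orbit}, 1\le p\le |H_\alpha|\}$ is exactly the set of primitive central idempotents of $\mathbb{C}[G]$.
   Context: $N$ is normal in $G$, $H$ acts on $N$ by conjugation. For a finite abelian group $K$, the idempotent eigenbasis of $\mathbb{C}[K]$ is the unique basis of $\mathbb{C}[K]$ consisting of simultaneous eigenvectors of left multiplication by elements of $\mathbb{C}[K]$ and consisting of pairwise orthogonal idempotents. $P_N$ is the idempotent eigenbasis of $\mathbb{C}[N]$; conjugation by $H$ permutes $P_N$; $H_\alpha$ is the common stabilizer in $H$ of the elements of $\mathcal{O}_\alpha$. A primitive central idempotent of an algebra $A$ is a nonzero central idempotent $J$ that cannot be written as $J=I_1+I_2$ with $I_1,I_2$ nonzero central idempotents satisfying $I_1I_2=I_2I_1=0$. *)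

theory Defs
  imports Complex_Main "HOL-Algebra.Algebra"
begin

text \<open>The complex group algebra of a finite group G is modelled as the set of functions
  carrier G \<Rightarrow> complex (zero outside the carrier); multiplication is convolution.
  For a subgroup K of G, the group algebra C[K] is identified with the subalgebra of
  functions supported on K.\<close>

definition grp_alg :: "'a set \<Rightarrow> ('a \<Rightarrow> complex) set" where
  "grp_alg K = {f. \<forall>x. x \<notin> K \<longrightarrow> f x = 0}"

definition conv :: "('a, 'b) monoid_scheme \<Rightarrow> ('a \<Rightarrow> complex) \<Rightarrow> ('a \<Rightarrow> complex) \<Rightarrow> ('a \<Rightarrow> complex)" where
  "conv G f g = (\<lambda>x. if x \<in> carrier G
       then (\<Sum>y\<in>carrier G. f y * g (inv\<^bsub>G\<^esub> y \<otimes>\<^bsub>G\<^esub> x)) else 0)"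

definition delta :: "'a \<Rightarrow> ('a \<Rightarrow> complex)" where
  "delta g = (\<lambda>x. if x = g then 1 else 0)"

definition conj_alg :: "('a, 'b) monoid_scheme \<Rightarrow> 'a \<Rightarrow> ('a \<Rightarrow> complex) \<Rightarrow> ('a \<Rightarrow> complex)" where
  "conj_alg G h f = conv G (conv G (delta h) f) (delta (inv\<^bsub>G\<^esub> h))"

definition lin_comb :: "('a \<Rightarrow> complex) set \<Rightarrow> (('a \<Rightarrow> complex) \<Rightarrow> complex) \<Rightarrow> ('a \<Rightarrow> complex)" where
  "lin_comb B c = (\<lambda>x. \<Sum>b\<in>B. c b * b x)"

definition is_basis_alg :: "'a set \<Rightarrow> ('a \<Rightarrow> complex) set \<Rightarrow> bool" where
  "is_basis_alg K B \<longleftrightarrow> finite B \<and> B \<subseteq> grp_alg K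
     \<and> (\<forall>c. lin_comb B c = (\<lambda>_. 0) \<longrightarrow> (\<forall>b\<in>B. c b = 0))
     \<and> (\<forall>f\<in>grp_alg K. \<exists>c. f = lin_comb B c)"

definition is_idem_eigenbasis :: "('a, 'b) monoid_scheme \<Rightarrow> 'a set \<Rightarrow> ('a \<Rightarrow> complex) set \<Rightarrow> bool" where
  "is_idem_eigenbasis G K B \<longleftrightarrow> is_basis_alg K B
     \<and> (\<forall>b\<in>B. \<forall>a\<in>grp_alg K. \<exists>e::complex. conv G a b = (\<lambda>x. e * b x))
     \<and> (\<forall>b\<in>B. conv G b b = b)
     \<and> (\<forall>b\<in>B. \<forall>b'\<in>B. b \<noteq> b' \<longrightarrow> conv G b b' = (\<lambda>_. 0))"

text \<open>the (unique) idempotent eigenbasis of C[K]\<close>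
definition idem_eigenbasis :: "('a, 'b) monoid_scheme \<Rightarrow> 'a set \<Rightarrow> ('a \<Rightarrow> complex) set" where
  "idem_eigenbasis G K = (THE B. is_idem_eigenbasis G K B)"

definition conj_orbit :: "('a, 'b) monoid_scheme \<Rightarrow> 'a set \<Rightarrow> ('a \<Rightarrow> complex) \<Rightarrow> ('a \<Rightarrow> complex) set" where
  "conj_orbit G H v = (\<lambda>h. conj_alg G h v) ` H"

definition conj_orbits :: "('a, 'b) monoid_scheme \<Rightarrow> 'a set \<Rightarrow> 'a set \<Rightarrow> ('a \<Rightarrow> complex) set set" where
  "conj_orbits G N H = conj_orbit G H ` idem_eigenbasis G N"

definition orbit_stab :: "('a, 'b) monoid_scheme \<Rightarrow> 'a set \<Rightarrow> ('a \<Rightarrow> complex) set \<Rightarrow> 'a set" where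
  "orbit_stab G H Orb = {h \<in> H. \<forall>v\<in>Orb. conj_alg G h v = v}"

definition central_idem :: "('a, 'b) monoid_scheme \<Rightarrow> ('a \<Rightarrow> complex) \<Rightarrow> bool" where
  "central_idem G J \<longleftrightarrow> J \<in> grp_alg (carrier G) \<and> conv G J J = J
     \<and> (\<forall>a\<in>grp_alg (carrier G). conv G a J = conv G J a)"

definition primitive_central_idem :: "('a, 'b) monoid_scheme \<Rightarrow> ('a \<Rightarrow> complex) \<Rightarrow> bool" where
  "primitive_central_idem G J \<longleftrightarrow> central_idem G J \<and> J \<noteq> (\<lambda>_. 0)
     \<and> \<not> (\<exists>I1 I2. central_idem G I1 \<and> central_idem G I2 \<and> I1 \<noteq> (\<lambda>_. 0) \<and> I2 \<noteq> (\<lambda>_. 0)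
            \<and> conv G I1 I2 = (\<lambda>_. 0) \<and> conv G I2 I1 = (\<lambda>_. 0)
            \<and> J = (\<lambda>x. I1 x + I2 x))"

end

theory Submission
  imports Defs "HOL-Library.Function_Algebras"
begin


lemma root_unity_prim:
  assumes "m > 0"
  shows "\<exists>w::complex. w ^ m = 1 \<and> (\<forall>j. 0 < j \<and> j < m \<longrightarrow> w ^ j \<noteq> 1)"
proof (intro exI conjI allI impI)
  let ?w = "cis (2 * pi / real m)"
  show "?w ^ m = 1" using assms by (simp add: DeMoivre)
  fix j assume j: "0 < j \<and> j < m"
  show "?w ^ j \<noteq> 1"
  proof
    assume "?w ^ j = 1"
    hence "cos (real j * (2 * pi / real m)) = 1" by (simp add: DeMoivre complex_eq_iff)
    then obtain n :: int where n: "real j * (2 * pi / real m) = real_of_int n * 2 * pi"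
      using cos_one_2pi_int by blast
    hence "real j = n * real m" using assms by (simp add: field_simps)
    hence "int j = n * int m" by (metis of_int_eq_iff of_int_mult of_int_of_nat_eq)
    moreover have "n > 0" using j calculation by (smt (verit) mult_nonpos_nonneg of_nat_0_le_iff of_nat_0_less_iff)
    ultimately have "int j \<ge> int m" by (simp add: mult_le_cancel_right1 mult.commute)
    thus False using j by simp
  qed
qed



locale galg = group G for G :: "('a, 'b) monoid_scheme" (structure) +
  assumes fin: "finite (carrier G)"
begin

abbreviation cv (infixl "\<star>" 70) where "f \<star> g \<equiv> conv G f g"

definition sc :: "complex \<Rightarrow> ('a \<Rightarrow> complex) \<Rightarrow> ('a \<Rightarrow> complex)" where
  "sc c f = (\<lambda>x. c * f x)"

lemma sc_apply[simp]: "sc c f x = c * f x" by (simp add: sc_def)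

lemma conv_in: "x \<in> carrier G \<Longrightarrow> (f \<star> g) x = (\<Sum>y\<in>carrier G. f y * g (inv y \<otimes> x))"
  by (simp add: conv_def)

lemma conv_out: "x \<notin> carrier G \<Longrightarrow> (f \<star> g) x = 0"
  by (simp add: conv_def)

lemma sum_shift:
  assumes "z \<in> carrier G"
  shows "(\<Sum>y\<in>carrier G. F y) = (\<Sum>w\<in>carrier G. F (z \<otimes> w))"
proof -
  have inj: "inj_on (\<lambda>w. z \<otimes> w) (carrier G)" using assms by (auto intro: inj_onI)
  have img: "(\<lambda>w. z \<otimes> w) ` carrier G = carrier G"
  proof
    show "(\<lambda>w. z \<otimes> w) ` carrier G \<subseteq> carrier G" using assms by auto
    show "carrier G \<subseteq> (\<lambda>w. z \<otimes> w) ` carrier G"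
    proof
      fix y assume y: "y \<in> carrier G"
      hence "y = z \<otimes> (inv z \<otimes> y)" using assms by (simp add: m_assoc[symmetric])
      thus "y \<in> (\<lambda>w. z \<otimes> w) ` carrier G" using y assms by blast
    qed
  qed
  have "(\<Sum>y\<in>carrier G. F y) = (\<Sum>y\<in>(\<lambda>w. z \<otimes> w) ` carrier G. F y)" using img by simp
  also have "\<dots> = (\<Sum>w\<in>carrier G. F (z \<otimes> w))" using inj by (simp add: sum.reindex)
  finally show ?thesis .
qed

lemma conv_assoc: "(f \<star> g) \<star> h = f \<star> (g \<star> h)"
proof
  fix x
  show "((f \<star> g) \<star> h) x = (f \<star> (g \<star> h)) x"
  proof (cases "x \<in> carrier G")
    case False thus ?thesis by (simp add: conv_out)
  next
    case x: True
    have "((f \<star> g) \<star> h) x = (\<Sum>y\<in>carrier G. (\<Sum>z\<in>carrier G. f z * g (inv z \<otimes> y)) * h (inv y \<otimes> x))"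
      using x by (simp add: conv_in)
    also have "\<dots> = (\<Sum>z\<in>carrier G. \<Sum>y\<in>carrier G. f z * g (inv z \<otimes> y) * h (inv y \<otimes> x))"
      unfolding sum_distrib_right by (rule sum.swap)
    also have "\<dots> = (\<Sum>z\<in>carrier G. \<Sum>w\<in>carrier G. f z * g w * h (inv w \<otimes> (inv z \<otimes> x)))"
    proof (rule sum.cong[OF refl])
      fix z assume z: "z \<in> carrier G"
      have "(\<Sum>y\<in>carrier G. f z * g (inv z \<otimes> y) * h (inv y \<otimes> x))
          = (\<Sum>w\<in>carrier G. f z * g (inv z \<otimes> (z \<otimes> w)) * h (inv (z \<otimes> w) \<otimes> x))"
        using z by (rule sum_shift)
      also have "\<dots> = (\<Sum>w\<in>carrier G. f z * g w * h (inv w \<otimes> (inv z \<otimes> x)))"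
      proof (intro sum.cong refl)
        fix w assume w: "w \<in> carrier G"
        have e1: "inv z \<otimes> (z \<otimes> w) = w" using z w by (simp add: m_assoc[symmetric])
        have e2: "inv (z \<otimes> w) \<otimes> x = inv w \<otimes> (inv z \<otimes> x)" using z w x by (simp add: inv_mult_group m_assoc)
        show "f z * g (inv z \<otimes> (z \<otimes> w)) * h (inv (z \<otimes> w) \<otimes> x) = f z * g w * h (inv w \<otimes> (inv z \<otimes> x))"
          by (simp only: e1 e2)
      qed
      finally show "(\<Sum>y\<in>carrier G. f z * g (inv z \<otimes> y) * h (inv y \<otimes> x))
          = (\<Sum>w\<in>carrier G. f z * g w * h (inv w \<otimes> (inv z \<otimes> x)))" .
    qed
    also have "\<dots> = (f \<star> (g \<star> h)) x"
      using x by (simp add: conv_in sum_distrib_left mult.assoc)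
    finally show ?thesis .
  qed
qed

lemma conv_delta_left:
  assumes "a \<in> carrier G" "x \<in> carrier G"
  shows "(delta a \<star> f) x = f (inv a \<otimes> x)"
proof -
  have "(delta a \<star> f) x = (\<Sum>y\<in>carrier G. if y = a then f (inv y \<otimes> x) else 0)"
    unfolding conv_in[OF assms(2)] by (intro sum.cong) (auto simp: delta_def)
  also have "\<dots> = f (inv a \<otimes> x)" using assms fin by (subst sum.delta) auto
  finally show ?thesis .
qed

lemma conv_delta_right:
  assumes "a \<in> carrier G" "x \<in> carrier G"
  shows "(f \<star> delta a) x = f (x \<otimes> inv a)"
proof -
  have "(f \<star> delta a) x = (\<Sum>y\<in>carrier G. if y = x \<otimes> inv a then f y else 0)"
    unfolding conv_in[OF assms(2)] delta_def
  proof (intro sum.cong refl)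
    fix y assume y: "y \<in> carrier G"
    have "(inv y \<otimes> x = a) = (y = x \<otimes> inv a)"
      using y assms
      by (metis inv_solve_left inv_solve_right inv_closed)
    thus "f y * (if inv y \<otimes> x = a then 1 else 0) = (if y = x \<otimes> inv a then f y else 0)"
      by simp
  qed
  also have "\<dots> = f (x \<otimes> inv a)" using assms fin by (subst sum.delta) auto
  finally show ?thesis .
qed

lemma delta_mult:
  assumes "a \<in> carrier G" "b \<in> carrier G"
  shows "delta a \<star> delta b = delta (a \<otimes> b)"
proof
  fix x show "(delta a \<star> delta b) x = delta (a \<otimes> b) x"
  proof (cases "x \<in> carrier G")
    case False
    hence "x \<noteq> a \<otimes> b" using assms by auto
    thus ?thesis using False by (simp add: conv_out) (simp add: delta_def)
  next
    case True
    have "(inv a \<otimes> x = b) = (x = a \<otimes> b)" using True assms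
      by (metis inv_solve_left m_closed)
    thus ?thesis using True assms by (simp add: conv_delta_left) (simp add: delta_def)
  qed
qed

definition V where "V = grp_alg (carrier G)"

lemma conv_V: "f \<star> g \<in> V" by (simp add: V_def grp_alg_def conv_out)

lemma conv_one_left: "f \<in> V \<Longrightarrow> delta \<one> \<star> f = f"
  by (rule ext, case_tac "x \<in> carrier G") (auto simp: conv_delta_left conv_out V_def grp_alg_def)

lemma conv_one_right: "f \<in> V \<Longrightarrow> f \<star> delta \<one> = f"
  by (rule ext, case_tac "x \<in> carrier G") (auto simp: conv_delta_right conv_out V_def grp_alg_def)

lemma conv_add_left: "(f + g) \<star> h = f \<star> h + g \<star> h"
  by (rule ext, case_tac "x \<in> carrier G") (auto simp: conv_in conv_out distrib_right sum.distrib)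

lemma conv_add_right: "h \<star> (f + g) = h \<star> f + h \<star> g"
  by (rule ext, case_tac "x \<in> carrier G") (auto simp: conv_in conv_out distrib_left sum.distrib)

lemma conv_diff_left: "(f - g) \<star> h = f \<star> h - g \<star> h"
  by (rule ext, case_tac "x \<in> carrier G") (auto simp: conv_in conv_out left_diff_distrib sum_subtractf)

lemma conv_diff_right: "h \<star> (f - g) = h \<star> f - h \<star> g"
  by (rule ext, case_tac "x \<in> carrier G") (auto simp: conv_in conv_out right_diff_distrib sum_subtractf)

lemma conv_sc_left: "sc c f \<star> h = sc c (f \<star> h)"
  by (rule ext, case_tac "x \<in> carrier G") (auto simp: conv_in conv_out sum_distrib_left mult.assoc)

lemma conv_sc_right: "h \<star> sc c f = sc c (h \<star> f)"
  by (rule ext, case_tac "x \<in> carrier G") (auto simp: conv_in conv_out sum_distrib_left mult.left_commute)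

lemma conv_zero_left[simp]: "0 \<star> h = 0"
  by (rule ext, case_tac "x \<in> carrier G") (auto simp: conv_in conv_out)

lemma conv_zero_right[simp]: "h \<star> 0 = 0"
  by (rule ext, case_tac "x \<in> carrier G") (auto simp: conv_in conv_out)

lemma conv_zero_left'[simp]: "(\<lambda>_. 0) \<star> h = (\<lambda>_. 0)"
  using conv_zero_left by (simp add: zero_fun_def)

lemma conv_zero_right'[simp]: "h \<star> (\<lambda>_. 0) = (\<lambda>_. 0)"
  using conv_zero_right by (simp add: zero_fun_def)

lemma conv_sum_left: "(\<Sum>i\<in>I. F i) \<star> h = (\<Sum>i\<in>I. F i \<star> h)"
proof (induction I rule: infinite_finite_induct)
  case (insert i J) thus ?case by (simp only: sum.insert[OF insert(1,2)] conv_add_left insert(3))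
qed auto

lemma conv_sum_right: "h \<star> (\<Sum>i\<in>I. F i) = (\<Sum>i\<in>I. h \<star> F i)"
proof (induction I rule: infinite_finite_induct)
  case (insert i J) thus ?case by (simp only: sum.insert[OF insert(1,2)] conv_add_right insert(3))
qed auto

lemma sum_fun_apply: "(\<Sum>i\<in>I. F i) x = (\<Sum>i\<in>I. F i x)"
proof (induction I rule: infinite_finite_induct)
qed auto

lemma sc_sum: "sc c (\<Sum>i\<in>I. F i) = (\<Sum>i\<in>I. sc c (F i))"
  by (rule ext) (simp add: sum_fun_apply sum_distrib_left)

lemma sum_sc: "(\<Sum>i\<in>I. sc (c i) f) = sc (\<Sum>i\<in>I. c i) f"
  by (rule ext) (simp add: sum_fun_apply sum_distrib_right)

lemma sc_sc[simp]: "sc a (sc b f) = sc (a * b) f" by (rule ext) simp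
lemma sc_one[simp]: "sc 1 f = f" by (rule ext) simp
lemma sc_zero[simp]: "sc 0 f = 0" by (rule ext) simp
lemma sc_zero2[simp]: "sc c 0 = 0" by (rule ext) simp

lemma grp_alg_sub: "K \<subseteq> carrier G \<Longrightarrow> f \<in> grp_alg K \<Longrightarrow> f \<in> V"
  by (auto simp: V_def grp_alg_def)

lemma conv_grp_alg:
  assumes "subgroup K G" "f \<in> grp_alg K" "g \<in> grp_alg K"
  shows "f \<star> g \<in> grp_alg K"
  unfolding grp_alg_def mem_Collect_eq
proof (intro allI impI)
  fix x assume x: "x \<notin> K"
  show "(f \<star> g) x = 0"
  proof (cases "x \<in> carrier G")
    case False thus ?thesis by (simp add: conv_out)
  next
    case True
    have "f y * g (inv y \<otimes> x) = 0" if y: "y \<in> carrier G" for y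
    proof (cases "y \<in> K \<and> inv y \<otimes> x \<in> K")
      case True
      hence "y \<otimes> (inv y \<otimes> x) \<in> K" using assms(1) by (simp add: subgroup.m_closed)
      hence "x \<in> K" using y \<open>x \<in> carrier G\<close> by (simp add: m_assoc[symmetric])
      thus ?thesis using x by simp
    next
      case False thus ?thesis using assms(2,3) by (auto simp: grp_alg_def)
    qed
    thus ?thesis using True by (simp add: conv_in sum.neutral)
  qed
qed

lemma delta_grp_alg: "k \<in> K \<Longrightarrow> delta k \<in> grp_alg K"
  by (simp add: grp_alg_def delta_def)

lemma grp_alg_add: "f \<in> grp_alg K \<Longrightarrow> g \<in> grp_alg K \<Longrightarrow> f + g \<in> grp_alg K"
  by (simp add: grp_alg_def)
lemma grp_alg_diff: "f \<in> grp_alg K \<Longrightarrow> g \<in> grp_alg K \<Longrightarrow> f - g \<in> grp_alg K"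
  by (simp add: grp_alg_def)
lemma grp_alg_sc: "f \<in> grp_alg K \<Longrightarrow> sc c f \<in> grp_alg K"
  by (simp add: grp_alg_def)
lemma grp_alg_zero: "0 \<in> grp_alg K"
  by (simp add: grp_alg_def)
lemma grp_alg_sum: "(\<And>i. i \<in> I \<Longrightarrow> F i \<in> grp_alg K) \<Longrightarrow> (\<Sum>i\<in>I. F i) \<in> grp_alg K"
  by (simp add: grp_alg_def sum_fun_apply)

lemma expand:
  assumes "finite K" "f \<in> grp_alg K"
  shows "f = (\<Sum>k\<in>K. sc (f k) (delta k))"
proof
  fix x
  have "(\<Sum>k\<in>K. sc (f k) (delta k)) x = (\<Sum>k\<in>K. if x = k then f k else 0)"
    unfolding sum_fun_apply by (intro sum.cong) (auto simp: delta_def)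
  also have "\<dots> = f x" using assms by (subst sum.delta') (auto simp: grp_alg_def)
  finally show "f x = (\<Sum>k\<in>K. sc (f k) (delta k)) x" by simp
qed

lemma commute_from_deltas:
  assumes "finite K" "f \<in> grp_alg K" "\<And>k. k \<in> K \<Longrightarrow> delta k \<star> a = a \<star> delta k"
  shows "f \<star> a = a \<star> f"
proof -
  have "f \<star> a = (\<Sum>k\<in>K. sc (f k) (delta k)) \<star> a" using expand[OF assms(1,2)] by simp
  also have "\<dots> = (\<Sum>k\<in>K. sc (f k) (delta k \<star> a))" by (simp add: conv_sum_left conv_sc_left)
  also have "\<dots> = (\<Sum>k\<in>K. sc (f k) (a \<star> delta k))" using assms(3) by simp
  also have "\<dots> = a \<star> (\<Sum>k\<in>K. sc (f k) (delta k))" by (simp add: conv_sum_right conv_sc_right)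
  also have "\<dots> = a \<star> f" using expand[OF assms(1,2)] by simp
  finally show ?thesis .
qed

lemma sub_finite: "subgroup K G \<Longrightarrow> finite K"
  using fin subgroup.subset finite_subset by blast

lemma comm_grp_alg:
  assumes "subgroup K G" "\<forall>x\<in>K. \<forall>y\<in>K. x \<otimes> y = y \<otimes> x"
    "f \<in> grp_alg K" "g \<in> grp_alg K"
  shows "f \<star> g = g \<star> f"
proof (rule commute_from_deltas[OF sub_finite[OF assms(1)] assms(3)])
  fix k assume k: "k \<in> K"
  show "delta k \<star> g = g \<star> delta k"
  proof (rule sym, rule commute_from_deltas[OF sub_finite[OF assms(1)] assms(4)])
    fix l assume l: "l \<in> K"
    have "k \<in> carrier G" "l \<in> carrier G" using k l assms(1) subgroup.subset by blast+
    thus "delta l \<star> delta k = delta k \<star> delta l" using assms(2) k l by (simp add: delta_mult)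
  qed
qed

end


context galg
begin

lemma sub_pow_closed: "subgroup K G \<Longrightarrow> k \<in> K \<Longrightarrow> k [^] (j::nat) \<in> K"
  by (induction j) (auto simp: subgroup.one_closed subgroup.m_closed)

lemma sub_carrier: "subgroup K G \<Longrightarrow> k \<in> K \<Longrightarrow> k \<in> carrier G"
  using subgroup.subset by blast

lemma pow_comm1: "k \<in> carrier G \<Longrightarrow> k \<otimes> k [^] (x::nat) = k [^] x \<otimes> k"
  by (metis nat_pow_Suc nat_pow_Suc2)

lemma sc_eq_zero_iff: "f \<noteq> 0 \<Longrightarrow> sc c f = 0 \<longleftrightarrow> c = 0"
  by (auto simp: fun_eq_iff)

lemma sc_cancel: "f \<noteq> 0 \<Longrightarrow> sc c f = sc d f \<Longrightarrow> c = d"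
  by (auto simp: fun_eq_iff)

lemma sum_zero_exists: "(\<Sum>i\<in>I. F i) \<noteq> 0 \<Longrightarrow> \<exists>i\<in>I. F i \<noteq> 0"
  by (metis sum.neutral)

lemma proj_exists:
  assumes K: "subgroup K G" and k: "k \<in> K"
  shows "\<exists>m::nat. m > 0 \<and> (\<exists>P w. (\<forall>i<m. P i \<in> grp_alg K) \<and> (\<forall>i<m. delta k \<star> P i = sc (w i) (P i))
     \<and> (\<forall>i<m. \<forall>i'<m. P i' \<star> P i = (if i = i' then P i else 0)) \<and> (\<Sum>i<m. P i) = delta \<one>)"
proof -
  define m where "m = order G"
  have m: "m > 0" unfolding m_def using fin by (simp add: order_gt_0_iff_finite)
  have kG: "k \<in> carrier G" using sub_carrier[OF K k] .
  have km: "k [^] m = \<one>" unfolding m_def using kG by (rule pow_order_eq_1)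
  obtain \<omega> :: complex where wm: "\<omega> ^ m = 1" and wp: "\<And>j. 0 < j \<Longrightarrow> j < m \<Longrightarrow> \<omega> ^ j \<noteq> 1"
    using root_unity_prim[OF m] by blast
  have wpow: "(\<omega> ^ a) ^ m = 1" for a by (metis power_mult mult.commute wm power_one)
  have wpow2: "\<omega> ^ (m * a) = 1" "\<omega> ^ (a * m) = 1" for a
    by (metis power_mult mult.commute wpow)+
  have w0: "\<omega> \<noteq> 0" using wm m by (metis power_0_left zero_neq_one gr_implies_not0)
  define P where "P i = (\<Sum>j<m. sc ((inverse \<omega>) ^ (i * j) / of_nat m) (delta (k [^] j)))" for i
  have PK: "P i \<in> grp_alg K" for i
    unfolding P_def by (intro grp_alg_sum grp_alg_sc delta_grp_alg sub_pow_closed[OF K k])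
  have PV: "P i \<in> V" for i using PK grp_alg_sub subgroup.subset[OF K] by blast
  have shift: "(\<Sum>j<m. F (Suc j)) = (\<Sum>j<m. F j)" if "F m = F 0" for F :: "nat \<Rightarrow> 'a \<Rightarrow> complex"
  proof -
    have "(\<Sum>j<Suc m. F j) = (\<Sum>j<m. F (Suc j)) + F 0" by (rule sum.lessThan_Suc_shift[THEN trans]) simp
    moreover have "(\<Sum>j<Suc m. F j) = (\<Sum>j<m. F j) + F m" by simp
    ultimately show ?thesis using that by (metis add_right_cancel)
  qed
  have eig: "delta k \<star> P i = sc (\<omega> ^ i) (P i)" for i
  proof -
    have "delta k \<star> P i = (\<Sum>j<m. sc ((inverse \<omega>) ^ (i * j) / of_nat m) (delta (k [^] Suc j)))"
      unfolding P_def conv_sum_right conv_sc_right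
      using kG by (intro sum.cong refl) (simp add: delta_mult pow_comm1)
    also have "\<dots> = (\<Sum>j<m. sc (\<omega> ^ i) (sc ((inverse \<omega>) ^ (i * Suc j) / of_nat m) (delta (k [^] Suc j))))"
    proof (intro sum.cong refl)
      fix j
      have e: "(inverse \<omega>) ^ (i * Suc j) = (inverse \<omega>) ^ i * (inverse \<omega>) ^ (i * j)"
        by (simp add: power_add[symmetric])
      have e2: "\<omega> ^ i * (inverse \<omega>) ^ i = 1" using w0 by (simp add: power_inverse)
      have "\<omega> ^ i * ((inverse \<omega>) ^ (i * Suc j) / of_nat m) = (\<omega> ^ i * (inverse \<omega>) ^ i) * (inverse \<omega>) ^ (i * j) / of_nat m"
        unfolding e by (simp add: mult.assoc)
      hence eqc: "(inverse \<omega>) ^ (i * j) / of_nat m = \<omega> ^ i * ((inverse \<omega>) ^ (i * Suc j) / of_nat m)"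
        unfolding e2 by simp (metis)
      thus "sc ((inverse \<omega>) ^ (i * j) / of_nat m) (delta (k [^] Suc j)) =
         sc (\<omega> ^ i) (sc ((inverse \<omega>) ^ (i * Suc j) / of_nat m) (delta (k [^] Suc j)))"
        by (simp only: sc_sc eqc)
    qed
    also have "\<dots> = sc (\<omega> ^ i) (\<Sum>j<m. sc ((inverse \<omega>) ^ (i * Suc j) / of_nat m) (delta (k [^] Suc j)))"
      by (simp add: sc_sum)
    also have "(\<Sum>j<m. sc ((inverse \<omega>) ^ (i * Suc j) / of_nat m) (delta (k [^] Suc j))) = P i"
      unfolding P_def
      by (rule shift[where F = "\<lambda>j. sc ((inverse \<omega>) ^ (i * j) / of_nat m) (delta (k [^] j))"])
        (simp add: km wpow2 power_inverse)
    finally show ?thesis .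
  qed
  have eigj: "delta (k [^] j) \<star> P i = sc (\<omega> ^ (i * j)) (P i)" for i j
  proof (induction j)
    case 0 thus ?case using PV by (simp add: conv_one_left)
  next
    case (Suc j)
    have "delta (k [^] Suc j) \<star> P i = delta (k [^] j) \<star> (delta k \<star> P i)"
      using kG by (simp add: delta_mult conv_assoc[symmetric])
    also have "\<dots> = delta (k [^] j) \<star> sc (\<omega> ^ i) (P i)" by (simp only: eig)
    also have "\<dots> = sc (\<omega> ^ i) (delta (k [^] j) \<star> P i)" by (rule conv_sc_right)
    also have "\<dots> = sc (\<omega> ^ i) (sc (\<omega> ^ (i * j)) (P i))" by (simp only: Suc)
    also have "\<dots> = sc (\<omega> ^ (i * Suc j)) (P i)" by (simp add: power_add)
    finally show ?case .
  qed
  have orth: "P i' \<star> P i = (if i = i' then P i else 0)" if i: "i < m" "i' < m" for i i'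
  proof -
    have "P i' \<star> P i = (\<Sum>j<m. sc ((inverse \<omega>) ^ (i' * j) / of_nat m) (sc (\<omega> ^ (i * j)) (P i)))"
      unfolding P_def[of i'] conv_sum_left conv_sc_left eigj ..
    also have "\<dots> = sc ((\<Sum>j<m. (\<omega> ^ i * inverse (\<omega> ^ i')) ^ j) / of_nat m) (P i)"
      by (simp add: sum_sc sum_divide_distrib power_mult power_mult_distrib power_inverse mult.commute
          flip: power_mult)
    also have "\<dots> = (if i = i' then P i else 0)"
    proof (cases "i = i'")
      case True thus ?thesis using w0 m by simp
    next
      case False
      let ?q = "\<omega> ^ i * inverse (\<omega> ^ i')"
      have "?q \<noteq> 1"
      proof
        assume "?q = 1"
        hence eq: "\<omega> ^ i = \<omega> ^ i'" using w0 by (simp add: field_simps)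
        show False
        proof (cases "i < i'")
          case True
          have "\<omega> ^ i' = \<omega> ^ i * \<omega> ^ (i' - i)" using True by (simp add: power_add[symmetric])
          hence "\<omega> ^ (i' - i) = 1" using eq w0 by simp
          thus False using wp[of "i' - i"] True i by simp
        next
          case False
          hence gt: "i' < i" using \<open>i \<noteq> i'\<close> by simp
          have "\<omega> ^ i = \<omega> ^ i' * \<omega> ^ (i - i')" using gt by (simp add: power_add[symmetric])
          hence "\<omega> ^ (i - i') = 1" using eq w0 by simp
          thus False using wp[of "i - i'"] gt i by simp
        qed
      qed
      moreover have "?q ^ m = 1" by (metis power_mult_distrib power_inverse wpow inverse_1 mult_1)
      ultimately have "(\<Sum>j<m. ?q ^ j) = 0" by (simp add: geometric_sum)
      thus ?thesis using False by simp
    qed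
    finally show ?thesis .
  qed
  have tot: "(\<Sum>i<m. P i) = delta \<one>"
  proof -
    have "(\<Sum>i<m. P i) = (\<Sum>j<m. sc ((\<Sum>i<m. ((inverse \<omega>) ^ j) ^ i) / of_nat m) (delta (k [^] j)))"
      unfolding P_def
      by (subst sum.swap) (simp add: sum_sc sum_divide_distrib power_mult mult.commute flip: power_mult)
    also have "\<dots> = (\<Sum>j<m. if j = 0 then delta \<one> else 0)"
    proof (intro sum.cong refl)
      fix j assume j: "j \<in> {..<m}"
      show "sc ((\<Sum>i<m. ((inverse \<omega>) ^ j) ^ i) / of_nat m) (delta (k [^] j)) = (if j = 0 then delta \<one> else 0)"
      proof (cases "j = 0")
        case True thus ?thesis using m by simp
      next
        case False
        have ne: "(inverse \<omega>) ^ j \<noteq> 1" using wp[of j] False j w0 by (simp add: power_inverse)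
        have "((inverse \<omega>) ^ j) ^ m = 1" by (metis power_inverse wpow inverse_1)
        hence "(\<Sum>i<m. ((inverse \<omega>) ^ j) ^ i) = 0" using ne by (simp add: geometric_sum)
        thus ?thesis using False by simp
      qed
    qed
    also have "\<dots> = delta \<one>" using m by (simp add: sum.delta)
    finally show ?thesis .
  qed
  have X: "(\<forall>i<m. P i \<in> grp_alg K) \<and> (\<forall>i<m. delta k \<star> P i = sc ((\<lambda>i. \<omega> ^ i) i) (P i))
     \<and> (\<forall>i<m. \<forall>i'<m. P i' \<star> P i = (if i = i' then P i else 0)) \<and> (\<Sum>i<m. P i) = delta \<one>"
    using PK eig orth tot by simp
  show ?thesis
    apply (rule exI[where x=m])
    apply (rule conjI[OF m])
    apply (rule exI[where x=P])
    apply (rule exI[where x="\<lambda>i. \<omega> ^ i"])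
    using X by simp
qed

end


context galg
begin

definition ois :: "'a set \<Rightarrow> 'a set \<Rightarrow> ('a \<Rightarrow> complex) set \<Rightarrow> bool" where
  "ois K S E \<longleftrightarrow> finite E \<and> E \<subseteq> grp_alg K \<and> 0 \<notin> E \<and> (\<forall>e\<in>E. e \<star> e = e)
     \<and> (\<forall>e\<in>E. \<forall>e'\<in>E. e \<noteq> e' \<longrightarrow> e \<star> e' = 0) \<and> (\<Sum>e\<in>E. e) = delta \<one>
     \<and> (\<forall>k\<in>S. \<forall>e\<in>E. \<exists>c. delta k \<star> e = sc c e)"

definition abel :: "'a set \<Rightarrow> bool" where
  "abel K \<longleftrightarrow> (\<forall>x\<in>K. \<forall>y\<in>K. x \<otimes> y = y \<otimes> x)"

lemma four:
  assumes "b \<star> c = c \<star> b"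
  shows "(a \<star> b) \<star> (c \<star> d) = (a \<star> c) \<star> (b \<star> d)"
proof -
  have "(a \<star> b) \<star> (c \<star> d) = a \<star> ((b \<star> c) \<star> d)" by (simp add: conv_assoc)
  also have "\<dots> = a \<star> ((c \<star> b) \<star> d)" using assms by simp
  also have "\<dots> = (a \<star> c) \<star> (b \<star> d)" by (simp add: conv_assoc)
  finally show ?thesis .
qed

lemma ois_refine:
  assumes K: "subgroup K G" and ab: "abel K" and k: "k \<in> K" and E: "ois K S E"
  shows "\<exists>E'. ois K (insert k S) E'"
proof -
  obtain m :: nat and P w where m: "m > 0" and PK: "\<forall>i<m. P i \<in> grp_alg K"
    and eig: "\<forall>i<m. delta k \<star> P i = sc (w i) (P i)"
    and orth: "\<forall>i<m. \<forall>i'<m. P i' \<star> P i = (if i = i' then P i else 0)"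
    and tot: "(\<Sum>i<m. P i) = delta \<one>"
    using proj_exists[OF K k] by blast
  have EK: "e \<in> grp_alg K" if "e \<in> E" for e using E that by (auto simp: ois_def)
  have comm: "x \<star> y = y \<star> x" if "x \<in> grp_alg K" "y \<in> grp_alg K" for x y
    using comm_grp_alg[OF K _ that] ab by (simp add: abel_def)
  have KV: "x \<in> V" if "x \<in> grp_alg K" for x using that grp_alg_sub subgroup.subset[OF K] by blast
  define A where "A = E \<times> {..<m}"
  define h where "h = (\<lambda>(e, i). e \<star> P i)"
  have finA: "finite A" using E by (simp add: A_def ois_def)
  have hK: "h a \<in> grp_alg K" if "a \<in> A" for a
    using that PK EK by (auto simp: A_def h_def intro!: conv_grp_alg[OF K])
  have prodval: "h a \<star> h b = (if a = b then h a else 0)" if a: "a \<in> A" and b: "b \<in> A" for a b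
  proof -
    obtain e i where ai: "a = (e, i)" "e \<in> E" "i < m" using a by (auto simp: A_def)
    obtain e' i' where bi: "b = (e', i')" "e' \<in> E" "i' < m" using b by (auto simp: A_def)
    have "h a \<star> h b = (e \<star> e') \<star> (P i \<star> P i')"
      unfolding ai bi h_def using four comm[OF PK[rule_format, OF ai(3)] EK[OF bi(2)]] by simp
    also have "\<dots> = (if a = b then h a else 0)"
    proof (cases "e = e'")
      case False
      hence "e \<star> e' = 0" using E ai bi by (auto simp: ois_def)
      thus ?thesis using False ai bi by simp
    next
      case True
      have ee: "e \<star> e = e" using E ai by (auto simp: ois_def)
      show ?thesis
      proof (cases "i = i'")
        case True thus ?thesis using \<open>e = e'\<close> ee orth ai bi by (simp add: h_def)
      next
        case False
        hence "P i \<star> P i' = 0" using orth ai bi by auto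
        thus ?thesis using False ai bi by simp
      qed
    qed
    finally show ?thesis .
  qed
  define E' where "E' = h ` A - {0}"
  have "ois K (insert k S) E'"
    unfolding ois_def
  proof (intro conjI ballI impI)
    show "finite E'" using finA by (simp add: E'_def)
    show "E' \<subseteq> grp_alg K" using hK by (auto simp: E'_def)
    show "0 \<notin> E'" by (simp add: E'_def)
  next
    fix x assume "x \<in> E'"
    then obtain a where "a \<in> A" "x = h a" by (auto simp: E'_def)
    thus "x \<star> x = x" using prodval by simp
  next
    fix x y assume "x \<in> E'" "y \<in> E'" "x \<noteq> y"
    then obtain a b where "a \<in> A" "x = h a" "b \<in> A" "y = h b" by (auto simp: E'_def)
    thus "x \<star> y = 0" using prodval \<open>x \<noteq> y\<close> by auto
  next
    have "(\<Sum>x\<in>E'. x) = (\<Sum>x\<in>h ` A. x)"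
      unfolding E'_def using sum.setdiff_irrelevant[of "h ` A" "\<lambda>x. x"] finA by simp
    also have "\<dots> = (\<Sum>a\<in>A. h a)"
    proof (subst sum.reindex_nontrivial[OF finA])
      fix a b assume ab: "a \<in> A" "b \<in> A" "a \<noteq> b" "h a = h b"
      have "h a = h a \<star> h a" using prodval[OF ab(1) ab(1)] by simp
      also have "\<dots> = h a \<star> h b" using ab(4) by simp
      also have "\<dots> = 0" using prodval[OF ab(1,2)] ab(3) by simp
      finally show "h a = 0" .
    qed simp
    also have "\<dots> = (\<Sum>e\<in>E. \<Sum>i<m. e \<star> P i)"
      unfolding A_def h_def by (simp add: sum.cartesian_product)
    also have "\<dots> = (\<Sum>e\<in>E. e)"
      by (intro sum.cong refl) (simp add: conv_sum_right[symmetric] tot conv_one_right KV EK)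
    also have "\<dots> = delta \<one>" using E by (simp add: ois_def)
    finally show "(\<Sum>x\<in>E'. x) = delta \<one>" .
  next
    fix k' x assume k': "k' \<in> insert k S" and x: "x \<in> E'"
    then obtain e i where ei: "e \<in> E" "i < m" "x = e \<star> P i" by (auto simp: E'_def A_def h_def)
    show "\<exists>c. delta k' \<star> x = sc c x"
    proof (cases "k' \<in> S")
      case True
      then obtain c where c: "delta k' \<star> e = sc c e" using E ei unfolding ois_def by blast
      have "delta k' \<star> x = sc c x" unfolding ei(3) conv_assoc[symmetric] c conv_sc_left ..
      thus ?thesis ..
    next
      case False
      hence "k' = k" using k' by simp
      have "delta k \<star> x = delta k \<star> (P i \<star> e)" unfolding ei(3) using comm EK PK ei by simp
      also have "\<dots> = sc (w i) (P i \<star> e)" unfolding conv_assoc[symmetric] using eig ei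
        by (simp add: conv_sc_left)
      also have "\<dots> = sc (w i) x" unfolding ei(3) using comm EK PK ei by simp
      finally show ?thesis using \<open>k' = k\<close> by blast
    qed
  qed
  thus ?thesis ..
qed

lemma ois_exists:
  assumes K: "subgroup K G" and ab: "abel K"
  shows "\<exists>E. ois K K E"
proof -
  have "finite S \<Longrightarrow> S \<subseteq> K \<Longrightarrow> \<exists>E. ois K S E" for S
  proof (induction S rule: finite_induct)
    case empty
    have one: "\<one> \<in> K" using K by (rule subgroup.one_closed)
    have nz: "delta \<one> \<noteq> (0::'a \<Rightarrow> complex)" by (auto simp: fun_eq_iff delta_def)
    have "ois K {} {delta \<one>}" unfolding ois_def
      using one nz by (simp add: delta_grp_alg delta_mult)
    thus ?case by blast
  next
    case (insert x F)
    then obtain E where "ois K F E" by blast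
    thus ?case using ois_refine[OF K ab] insert by blast
  qed
  thus ?thesis using sub_finite[OF K] by blast
qed


lemma lin_comb_eq: "lin_comb B c = (\<Sum>b\<in>B. sc (c b) b)"
  by (rule ext) (simp add: lin_comb_def sum_fun_apply)

lemma sum_pick:
  assumes "finite B" "b \<in> B" "\<And>x. x \<in> B \<Longrightarrow> x \<noteq> b \<Longrightarrow> F x = 0"
  shows "(\<Sum>x\<in>B. F x) = F b"
proof -
  have "(\<Sum>x\<in>B. F x) = F b + (\<Sum>x\<in>B - {b}. F x)" using assms(1,2) by (rule sum.remove)
  also have "(\<Sum>x\<in>B - {b}. F x) = 0" using assms(3) by (intro sum.neutral) auto
  finally show ?thesis by simp
qed

lemma eigen_all:
  assumes K: "subgroup K G" and E: "ois K K E" and a: "a \<in> grp_alg K" and e: "e \<in> E"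
  shows "\<exists>c. a \<star> e = sc c e"
proof -
  have "\<forall>k\<in>K. \<exists>c. delta k \<star> e = sc c e" using E e unfolding ois_def by blast
  then obtain cf where cf: "\<forall>k\<in>K. delta k \<star> e = sc (cf k) e" by metis
  have "a \<star> e = (\<Sum>k\<in>K. sc (a k) (delta k)) \<star> e" using expand[OF sub_finite[OF K] a] by simp
  also have "\<dots> = (\<Sum>k\<in>K. sc (a k) (sc (cf k) e))"
    unfolding conv_sum_left conv_sc_left using cf by (intro sum.cong refl) simp
  also have "\<dots> = sc (\<Sum>k\<in>K. a k * cf k) e" by (simp add: sum_sc)
  finally show ?thesis ..
qed

lemma ois_basis:
  assumes K: "subgroup K G" and E: "ois K K E"
  shows "is_idem_eigenbasis G K E"
proof -
  have finE: "finite E" and EK: "E \<subseteq> grp_alg K" and nz: "0 \<notin> E"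
    and idem: "\<forall>e\<in>E. e \<star> e = e" and orth: "\<forall>e\<in>E. \<forall>e'\<in>E. e \<noteq> e' \<longrightarrow> e \<star> e' = 0"
    and tot: "(\<Sum>e\<in>E. e) = delta \<one>"
    using E by (auto simp: ois_def)
  have KV: "x \<in> V" if "x \<in> grp_alg K" for x using that grp_alg_sub subgroup.subset[OF K] by blast
  have li: "\<forall>b\<in>E. c b = 0" if "lin_comb E c = (\<lambda>_. 0)" for c
  proof
    fix b assume b: "b \<in> E"
    have "0 = lin_comb E c \<star> b" using that by (simp add: zero_fun_def)
    also have "\<dots> = (\<Sum>e\<in>E. sc (c e) (e \<star> b))" by (simp add: lin_comb_eq conv_sum_left conv_sc_left)
    also have "\<dots> = sc (c b) (b \<star> b)" using finE b orth by (intro sum_pick) auto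
    also have "\<dots> = sc (c b) b" using idem b by simp
    finally have "sc (c b) b = 0" by simp
    moreover have bnz: "b \<noteq> 0" using nz b by auto
    ultimately show "c b = 0" using sc_eq_zero_iff[OF bnz] by simp
  qed
  have sp: "\<exists>c. f = lin_comb E c" if f: "f \<in> grp_alg K" for f
  proof -
    have "\<forall>e\<in>E. \<exists>c. f \<star> e = sc c e" using eigen_all[OF K E f] by blast
    then obtain cf where cf: "\<forall>e\<in>E. f \<star> e = sc (cf e) e" by metis
    have "f = f \<star> delta \<one>" using KV[OF f] by (simp add: conv_one_right)
    also have "\<dots> = (\<Sum>e\<in>E. f \<star> e)" by (simp add: tot[symmetric] conv_sum_right)
    also have "\<dots> = lin_comb E cf" using cf by (simp add: lin_comb_eq)
    finally show ?thesis by blast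
  qed
  have eg: "\<exists>c::complex. conv G a b = (\<lambda>x. c * b x)" if "b \<in> E" "a \<in> grp_alg K" for a b
    using eigen_all[OF K E that(2,1)] by (simp add: sc_def)
  show ?thesis
    unfolding is_idem_eigenbasis_def is_basis_alg_def
    using finE EK li sp eg idem orth by (auto simp: zero_fun_def)
qed

lemma basis_nonzero:
  assumes B: "is_idem_eigenbasis G K B" and b: "b \<in> B"
  shows "b \<noteq> 0"
proof
  assume b0: "b = 0"
  have finB: "finite B" using B by (simp add: is_idem_eigenbasis_def is_basis_alg_def)
  have "lin_comb B (\<lambda>x. if x = b then 1 else 0) = sc 1 b"
    unfolding lin_comb_eq using finB b by (subst sum_pick[where b=b]) auto
  hence "lin_comb B (\<lambda>x. if x = b then 1 else 0) = (\<lambda>_. 0)" using b0 by (simp add: zero_fun_def)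
  hence "(\<lambda>x. if x = b then 1 else (0::complex)) b = 0"
    using B b unfolding is_idem_eigenbasis_def is_basis_alg_def by blast
  thus False by simp
qed

lemma ois_unique:
  assumes K: "subgroup K G" and ab: "abel K" and E: "ois K K E" and B: "is_idem_eigenbasis G K B"
  shows "B = E"
proof -
  have finE: "finite E" and EK: "E \<subseteq> grp_alg K" and nz: "0 \<notin> E"
    and idem: "\<forall>e\<in>E. e \<star> e = e" and orth: "\<forall>e\<in>E. \<forall>e'\<in>E. e \<noteq> e' \<longrightarrow> e \<star> e' = 0"
    and tot: "(\<Sum>e\<in>E. e) = delta \<one>"
    using E by (auto simp: ois_def)
  have finB: "finite B" and BK: "B \<subseteq> grp_alg K"
    and Bsp: "\<forall>f\<in>grp_alg K. \<exists>c. f = lin_comb B c"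
    and Beig: "\<forall>b\<in>B. \<forall>a\<in>grp_alg K. \<exists>e::complex. conv G a b = (\<lambda>x. e * b x)"
    and Bidem: "\<forall>b\<in>B. b \<star> b = b"
    using B by (auto simp: is_idem_eigenbasis_def is_basis_alg_def)
  have KV: "x \<in> V" if "x \<in> grp_alg K" for x using that grp_alg_sub subgroup.subset[OF K] by blast
  have comm: "x \<star> y = y \<star> x" if "x \<in> grp_alg K" "y \<in> grp_alg K" for x y
    using comm_grp_alg[OF K _ that] ab by (simp add: abel_def)
  have BE: "b \<in> E" if b: "b \<in> B" for b
  proof -
    have bK: "b \<in> grp_alg K" using BK b by blast
    have bnz: "b \<noteq> 0" using basis_nonzero[OF B b] .
    have "b = b \<star> delta \<one>" using KV[OF bK] by (simp add: conv_one_right)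
    also have "\<dots> = (\<Sum>e\<in>E. b \<star> e)" by (simp add: tot[symmetric] conv_sum_right)
    finally have "(\<Sum>e\<in>E. b \<star> e) \<noteq> 0" using bnz by simp
    then obtain e where e: "e \<in> E" "b \<star> e \<noteq> 0" using sum_zero_exists by blast
    have eK: "e \<in> grp_alg K" using EK e by blast
    obtain \<mu> where mu: "b \<star> e = sc \<mu> e" using eigen_all[OF K E bK e(1)] by blast
    obtain \<nu> where nu: "e \<star> b = sc \<nu> b" using Beig b eK by (auto simp: sc_def)
    have eq: "sc \<mu> e = sc \<nu> b" using mu nu comm[OF bK eK] by simp
    have mu0: "\<mu> \<noteq> 0" using e(2) mu by auto
    have e_eq: "e = sc (\<nu> / \<mu>) b"
    proof -
      have "e = sc (1 / \<mu>) (sc \<mu> e)" using mu0 by simp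
      also have "\<dots> = sc (\<nu> / \<mu>) b" using eq by simp
      finally show ?thesis .
    qed
    have "sc (\<nu> / \<mu>) b = sc (\<nu> / \<mu>) b \<star> sc (\<nu> / \<mu>) b" using idem e e_eq by simp
    also have "\<dots> = sc ((\<nu> / \<mu>) * (\<nu> / \<mu>)) b" using Bidem b by (simp add: conv_sc_left conv_sc_right)
    finally have tt: "\<nu> / \<mu> = (\<nu> / \<mu>) * (\<nu> / \<mu>)" by (rule sc_cancel[OF bnz])
    have "\<And>t::complex. t = t * t \<Longrightarrow> t = 0 \<or> t = 1"
    proof -
      fix t :: complex assume "t = t * t"
      hence "t * (t - 1) = 0" by (simp add: right_diff_distrib)
      thus "t = 0 \<or> t = 1" by simp
    qed
    hence "\<nu> / \<mu> = 0 \<or> \<nu> / \<mu> = 1" using tt by blast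
    moreover have "\<nu> / \<mu> \<noteq> 0" using e_eq nz e by auto
    ultimately have "e = b" using e_eq by simp
    thus ?thesis using e by simp
  qed
  have EB: "e \<in> B" if e: "e \<in> E" for e
  proof (rule ccontr)
    assume nb: "e \<notin> B"
    have eK: "e \<in> grp_alg K" using EK e by blast
    obtain c where c: "e = lin_comb B c" using Bsp eK by blast
    have "e = e \<star> e" using idem e by simp
    also have "\<dots> = (\<Sum>b\<in>B. sc (c b) (e \<star> b))"
      by (subst (2) c) (simp add: lin_comb_eq conv_sum_right conv_sc_right)
    also have "\<dots> = 0"
    proof (intro sum.neutral ballI)
      fix b assume "b \<in> B"
      hence "b \<in> E" "b \<noteq> e" using BE nb by auto
      thus "sc (c b) (e \<star> b) = 0" using orth e by simp
    qed
    finally show False using nz e by simp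
  qed
  show ?thesis using BE EB by blast
qed

lemma idem_eb:
  assumes K: "subgroup K G" and ab: "abel K" and E: "ois K K E"
  shows "idem_eigenbasis G K = E"
  unfolding idem_eigenbasis_def
  by (rule the_equality[where P="is_idem_eigenbasis G K", OF ois_basis[OF K E]]) (rule ois_unique[OF K ab E])

lemma idem_eb_ois:
  assumes K: "subgroup K G" and ab: "abel K"
  shows "ois K K (idem_eigenbasis G K)"
proof -
  obtain E where "ois K K E" using ois_exists[OF K ab] by blast
  thus ?thesis using idem_eb[OF K ab] by simp
qed

end


context galg
begin

abbreviation cj where "cj h f \<equiv> conj_alg G h f"

lemma cj_def: "cj h f = (delta h \<star> f) \<star> delta (inv h)"
  by (simp add: conj_alg_def)

lemma cj_V: "cj h f \<in> V" by (simp add: cj_def conv_V)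

lemma cj_apply:
  assumes "h \<in> carrier G" "x \<in> carrier G"
  shows "cj h f x = f (inv h \<otimes> x \<otimes> h)"
  using assms by (simp add: cj_def conv_delta_right conv_delta_left m_assoc)

lemma delta_inv_l: "h \<in> carrier G \<Longrightarrow> delta (inv h) \<star> delta h = delta \<one>"
  by (simp add: delta_mult)
lemma delta_inv_r: "h \<in> carrier G \<Longrightarrow> delta h \<star> delta (inv h) = delta \<one>"
  by (simp add: delta_mult)

lemma cj_mult:
  assumes h: "h \<in> carrier G"
  shows "cj h (a \<star> b) = cj h a \<star> cj h b"
proof -
  have "cj h a \<star> cj h b = (delta h \<star> a) \<star> ((delta (inv h) \<star> delta h) \<star> (b \<star> delta (inv h)))"
    by (simp add: cj_def conv_assoc)
  also have "\<dots> = (delta h \<star> a) \<star> (b \<star> delta (inv h))"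
    using h by (simp add: delta_inv_l conv_one_left conv_V)
  also have "\<dots> = cj h (a \<star> b)" by (simp add: cj_def conv_assoc)
  finally show ?thesis by simp
qed

lemma cj_comp:
  assumes "g \<in> carrier G" "h \<in> carrier G"
  shows "cj g (cj h f) = cj (g \<otimes> h) f"
proof -
  have "cj g (cj h f) = ((delta g \<star> delta h) \<star> f) \<star> (delta (inv h) \<star> delta (inv g))"
    by (simp add: cj_def conv_assoc)
  also have "\<dots> = cj (g \<otimes> h) f" using assms by (simp add: cj_def delta_mult inv_mult_group)
  finally show ?thesis .
qed

lemma cj_one: "f \<in> V \<Longrightarrow> cj \<one> f = f"
  by (simp add: cj_def conv_one_left conv_one_right conv_V)

lemma cj_inv: "h \<in> carrier G \<Longrightarrow> f \<in> V \<Longrightarrow> cj (inv h) (cj h f) = f"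
  by (simp add: cj_comp cj_one)

lemma cj_inv2: "h \<in> carrier G \<Longrightarrow> f \<in> V \<Longrightarrow> cj h (cj (inv h) f) = f"
  by (simp add: cj_comp cj_one)

lemma cj_zero[simp]: "cj h 0 = 0" by (simp add: cj_def)

lemma cj_sc: "cj h (sc c f) = sc c (cj h f)" by (simp add: cj_def conv_sc_left conv_sc_right)

lemma cj_sum: "cj h (\<Sum>i\<in>I. F i) = (\<Sum>i\<in>I. cj h (F i))"
  by (simp add: cj_def conv_sum_left conv_sum_right)

lemma cj_delta: "h \<in> carrier G \<Longrightarrow> k \<in> carrier G \<Longrightarrow> cj h (delta k) = delta (h \<otimes> k \<otimes> inv h)"
  by (simp add: cj_def delta_mult)

lemma delta_move: "h \<in> carrier G \<Longrightarrow> f \<in> V \<Longrightarrow> delta h \<star> f = cj h f \<star> delta h"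
  by (simp add: cj_def conv_assoc delta_inv_l conv_one_right conv_V)

lemma cj_normal:
  assumes N: "N \<lhd> G" and h: "h \<in> carrier G" and f: "f \<in> grp_alg N"
  shows "cj h f \<in> grp_alg N"
  unfolding grp_alg_def mem_Collect_eq
proof (intro allI impI)
  fix x assume x: "x \<notin> N"
  show "cj h f x = 0"
  proof (cases "x \<in> carrier G")
    case False thus ?thesis by (simp add: cj_def conv_out)
  next
    case True
    have "inv h \<otimes> x \<otimes> h \<notin> N"
    proof
      assume a: "inv h \<otimes> x \<otimes> h \<in> N"
      have "h \<otimes> (inv h \<otimes> x \<otimes> h) \<otimes> inv h \<in> N"
        using normal.inv_op_closed2[OF N h a] .
      moreover have "h \<otimes> (inv h \<otimes> x \<otimes> h) \<otimes> inv h = x" using h True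
        by (simp add: m_assoc[symmetric]) (simp add: m_assoc)
      ultimately show False using x by simp
    qed
    thus ?thesis using f h True by (simp add: cj_apply grp_alg_def)
  qed
qed

lemma cj_fix_grp_alg:
  assumes K: "subgroup K G" and ab: "abel K" and h: "h \<in> K" and u: "u \<in> grp_alg K"
  shows "cj h u = u"
proof -
  have hG: "h \<in> carrier G" using K h subgroup.subset by blast
  have "delta h \<star> u = u \<star> delta h"
    using comm_grp_alg[OF K _ delta_grp_alg[OF h] u] ab by (simp add: abel_def)
  hence "cj h u = (u \<star> delta h) \<star> delta (inv h)" by (simp add: cj_def)
  also have "\<dots> = u" using hG u grp_alg_sub[OF subgroup.subset[OF K] u]
    by (simp add: conv_assoc delta_inv_r conv_one_right)
  finally show ?thesis .
qed

lemma cj_ois: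
  assumes N: "N \<lhd> G" and ab: "abel N" and h: "h \<in> carrier G" and E: "ois N N E"
  shows "ois N N (cj h ` E)"
proof -
  have NS: "subgroup N G" using N normal_imp_subgroup by blast
  have finE: "finite E" and EK: "E \<subseteq> grp_alg N" and nz: "0 \<notin> E"
    and idem: "\<forall>e\<in>E. e \<star> e = e" and orth: "\<forall>e\<in>E. \<forall>e'\<in>E. e \<noteq> e' \<longrightarrow> e \<star> e' = 0"
    and tot: "(\<Sum>e\<in>E. e) = delta \<one>" and eig: "\<forall>k\<in>N. \<forall>e\<in>E. \<exists>c. delta k \<star> e = sc c e"
    using E by (auto simp: ois_def)
  have EV: "e \<in> V" if "e \<in> E" for e using that EK grp_alg_sub[OF subgroup.subset[OF NS]] by blast
  have inj: "inj_on (cj h) E"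
    by (rule inj_onI) (metis cj_inv h EV)
  show ?thesis unfolding ois_def
  proof (intro conjI ballI impI)
    show "finite (cj h ` E)" using finE by simp
    show "cj h ` E \<subseteq> grp_alg N" using EK cj_normal[OF N h] by blast
    show "0 \<notin> cj h ` E"
    proof
      assume "0 \<in> cj h ` E"
      then obtain e where "e \<in> E" "cj h e = 0" by auto
      hence "e = 0" using cj_inv[OF h EV[of e]] by (metis cj_zero)
      thus False using nz \<open>e \<in> E\<close> by simp
    qed
  next
    fix x assume "x \<in> cj h ` E"
    then obtain e where e: "e \<in> E" "x = cj h e" by auto
    thus "x \<star> x = x" using idem h by (simp add: cj_mult[symmetric])
  next
    fix x y assume "x \<in> cj h ` E" "y \<in> cj h ` E" "x \<noteq> y"
    then obtain e e' where "e \<in> E" "x = cj h e" "e' \<in> E" "y = cj h e'" by auto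
    thus "x \<star> y = 0" using orth h \<open>x \<noteq> y\<close> by (cases "e = e'") (auto simp: cj_mult[symmetric])
  next
    have "(\<Sum>x\<in>cj h ` E. x) = (\<Sum>e\<in>E. cj h e)" using inj by (simp add: sum.reindex)
    also have "\<dots> = cj h (delta \<one>)" by (simp add: cj_sum[symmetric] tot)
    also have "\<dots> = delta \<one>" using h by (simp add: cj_delta)
    finally show "(\<Sum>x\<in>cj h ` E. x) = delta \<one>" .
  next
    fix k x assume k: "k \<in> N" and "x \<in> cj h ` E"
    then obtain e where e: "e \<in> E" "x = cj h e" by auto
    have kG: "k \<in> carrier G" using k NS subgroup.subset by blast
    have k': "inv h \<otimes> k \<otimes> h \<in> N" using normal.inv_op_closed1[OF N h k] .
    obtain c where c: "delta (inv h \<otimes> k \<otimes> h) \<star> e = sc c e" using eig k' e by blast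
    have dk: "cj h (delta (inv h \<otimes> k \<otimes> h)) = delta k"
      using h kG by (simp add: cj_delta m_assoc[symmetric]) (simp add: m_assoc)
    have "delta k \<star> x = cj h (delta (inv h \<otimes> k \<otimes> h) \<star> e)" using h by (simp add: cj_mult dk e)
    also have "\<dots> = sc c x" using c e by (simp add: cj_sc)
    finally show "\<exists>c. delta k \<star> x = sc c x" by blast
  qed
qed

lemma cj_perm:
  assumes N: "N \<lhd> G" and ab: "abel N" and h: "h \<in> carrier G"
  shows "cj h ` idem_eigenbasis G N = idem_eigenbasis G N"
proof -
  have NS: "subgroup N G" using N normal_imp_subgroup by blast
  have E: "ois N N (idem_eigenbasis G N)" using idem_eb_ois[OF NS ab] .
  show ?thesis using idem_eb[OF NS ab cj_ois[OF N ab h E]] by simp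
qed

end


locale sdp = galg G for G :: "('a, 'b) monoid_scheme" (structure) +
  fixes N H :: "'a set"
  assumes Nn: "N \<lhd> G" and Hs: "subgroup H G" and NH1: "N \<inter> H = {\<one>}"
    and NHC: "N <#> H = carrier G" and abN: "abel N" and abH: "abel H"
begin

abbreviation PN where "PN \<equiv> idem_eigenbasis G N"
abbreviation Orb where "Orb v \<equiv> conj_orbit G H v"
abbreviation Stb where "Stb v \<equiv> orbit_stab G H (conj_orbit G H v)"
abbreviation UU where "UU v \<equiv> idem_eigenbasis G (Stb v)"
definition JJ where "JJ v u = (\<Sum>w\<in>Orb v. w \<star> u)"

lemma NS: "subgroup N G" using Nn normal_imp_subgroup by blast
lemma HG: "h \<in> H \<Longrightarrow> h \<in> carrier G" using Hs subgroup.subset by blast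
lemma NG: "n \<in> N \<Longrightarrow> n \<in> carrier G" using NS subgroup.subset by blast

lemma PN_ois: "ois N N PN" using idem_eb_ois[OF NS abN] .

lemma PN_fin: "finite PN" using PN_ois by (simp add: ois_def)
lemma PN_K: "w \<in> PN \<Longrightarrow> w \<in> grp_alg N" using PN_ois by (auto simp: ois_def)
lemma PN_V: "w \<in> PN \<Longrightarrow> w \<in> V" using PN_K grp_alg_sub subgroup.subset[OF NS] by blast
lemma PN_nz: "w \<in> PN \<Longrightarrow> w \<noteq> 0" using PN_ois by (auto simp: ois_def)
lemma PN_idem: "w \<in> PN \<Longrightarrow> w \<star> w = w" using PN_ois by (auto simp: ois_def)
lemma PN_orth: "w \<in> PN \<Longrightarrow> w' \<in> PN \<Longrightarrow> w \<noteq> w' \<Longrightarrow> w \<star> w' = 0" using PN_ois by (auto simp: ois_def)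
lemma PN_sum: "(\<Sum>w\<in>PN. w) = delta \<one>" using PN_ois by (auto simp: ois_def)
lemma PN_eig: "w \<in> PN \<Longrightarrow> n \<in> N \<Longrightarrow> \<exists>c. delta n \<star> w = sc c w" using PN_ois by (auto simp: ois_def)
lemma PN_cj: "h \<in> carrier G \<Longrightarrow> w \<in> PN \<Longrightarrow> cj h w \<in> PN"
  using cj_perm[OF Nn abN] by blast

lemma K3: "w \<in> PN \<Longrightarrow> n \<in> N \<Longrightarrow> delta n \<star> w = w \<star> delta n"
  using comm_grp_alg[OF NS _ delta_grp_alg PN_K] abN by (simp add: abel_def)

lemma Orb_sub: "v \<in> PN \<Longrightarrow> Orb v \<subseteq> PN"
  using PN_cj HG by (auto simp: conj_orbit_def)

lemma v_Orb: "v \<in> PN \<Longrightarrow> v \<in> Orb v"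
  unfolding conj_orbit_def using subgroup.one_closed[OF Hs] cj_one[OF PN_V] by force

lemma Orb_fin: "finite (Orb v)" using sub_finite[OF Hs] by (simp add: conj_orbit_def)

lemma Stb_sub_H: "Stb v \<subseteq> H" by (auto simp: orbit_stab_def)

lemma Stb_subgroup:
  assumes v: "v \<in> PN"
  shows "subgroup (Stb v) G"
proof (rule subgroupI)
  show "Stb v \<subseteq> carrier G" using Stb_sub_H HG by blast
  have "\<one> \<in> Stb v" unfolding orbit_stab_def
    using subgroup.one_closed[OF Hs] cj_one PN_V Orb_sub[OF v] by blast
  thus "Stb v \<noteq> {}" by blast
next
  fix a assume a: "a \<in> Stb v"
  hence aH: "a \<in> H" and fa: "\<forall>w\<in>Orb v. cj a w = w" by (auto simp: orbit_stab_def)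
  have "cj (inv a) w = w" if w: "w \<in> Orb v" for w
  proof -
    have "cj (inv a) w = cj (inv a) (cj a w)" using fa w by simp
    also have "\<dots> = w" using cj_inv HG[OF aH] PN_V Orb_sub[OF v] w by blast
    finally show ?thesis .
  qed
  thus "inv a \<in> Stb v" using aH subgroup.m_inv_closed[OF Hs] by (auto simp: orbit_stab_def)
next
  fix a b assume a: "a \<in> Stb v" and b: "b \<in> Stb v"
  hence aH: "a \<in> H" and fa: "\<forall>w\<in>Orb v. cj a w = w" and bH: "b \<in> H" and fb: "\<forall>w\<in>Orb v. cj b w = w"
    by (auto simp: orbit_stab_def)
  have "cj (a \<otimes> b) w = w" if w: "w \<in> Orb v" for w
    using cj_comp[OF HG[OF aH] HG[OF bH], of w] fa fb w by simp
  thus "a \<otimes> b \<in> Stb v" using aH bH subgroup.m_closed[OF Hs] by (auto simp: orbit_stab_def)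
qed

lemma Stb_abel: "abel (Stb v)" using abH Stb_sub_H by (auto simp: abel_def)

lemma U_ois: "v \<in> PN \<Longrightarrow> ois (Stb v) (Stb v) (UU v)"
  using idem_eb_ois[OF Stb_subgroup Stb_abel] .

lemma Stb_char:
  assumes v: "v \<in> PN" and h: "h \<in> H" and hv: "cj h v = v"
  shows "h \<in> Stb v"
proof -
  have "cj h w = w" if w: "w \<in> Orb v" for w
  proof -
    obtain h' where h': "h' \<in> H" "w = cj h' v" using w by (auto simp: conj_orbit_def)
    have "cj h w = cj (h \<otimes> h') v" using cj_comp HG h h' by simp
    also have "h \<otimes> h' = h' \<otimes> h" using abH h h' by (simp add: abel_def)
    also have "cj (h' \<otimes> h) v = cj h' (cj h v)" using cj_comp HG h h' by simp
    also have "\<dots> = w" using hv h' by simp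
    finally show ?thesis .
  qed
  thus ?thesis using h by (auto simp: orbit_stab_def)
qed

lemma Orb_perm:
  assumes v: "v \<in> PN" and h: "h \<in> H"
  shows "cj h ` Orb v = Orb v" and "inj_on (cj h) (Orb v)"
proof -
  show "inj_on (cj h) (Orb v)"
    by (rule inj_onI) (metis cj_inv HG[OF h] PN_V Orb_sub[OF v] subsetD)
  show "cj h ` Orb v = Orb v"
  proof
    show "cj h ` Orb v \<subseteq> Orb v"
    proof
      fix x assume "x \<in> cj h ` Orb v"
      then obtain h' where h': "h' \<in> H" "x = cj h (cj h' v)" by (auto simp: conj_orbit_def)
      hence "x = cj (h \<otimes> h') v" using cj_comp HG h by simp
      thus "x \<in> Orb v" using h h' subgroup.m_closed[OF Hs] by (auto simp: conj_orbit_def)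
    qed
    show "Orb v \<subseteq> cj h ` Orb v"
    proof
      fix x assume "x \<in> Orb v"
      then obtain h' where h': "h' \<in> H" "x = cj h' v" by (auto simp: conj_orbit_def)
      have ih: "inv h \<otimes> h' \<in> H" using h h' Hs by (simp add: subgroup.m_closed subgroup.m_inv_closed)
      have "cj h (cj (inv h \<otimes> h') v) = cj (h \<otimes> (inv h \<otimes> h')) v"
        using cj_comp HG h ih by simp
      also have "h \<otimes> (inv h \<otimes> h') = h'" using HG h h' by (simp add: m_assoc[symmetric])
      finally have "x = cj h (cj (inv h \<otimes> h') v)" using h' by simp
      moreover have "cj (inv h \<otimes> h') v \<in> Orb v" using ih by (auto simp: conj_orbit_def)
      ultimately show "x \<in> cj h ` Orb v" by blast
    qed
  qed
qed

lemma K1: "v \<in> PN \<Longrightarrow> w \<in> Orb v \<Longrightarrow> s \<in> Stb v \<Longrightarrow> delta s \<star> w = w \<star> delta s"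
  using delta_move[of s w] HG Stb_sub_H PN_V Orb_sub by (auto simp: orbit_stab_def)

lemma K2:
  assumes v: "v \<in> PN" and w: "w \<in> Orb v" and u: "u \<in> grp_alg (Stb v)"
  shows "w \<star> u = u \<star> w"
proof -
  have "u \<star> w = w \<star> u"
    by (rule commute_from_deltas[OF sub_finite[OF Stb_subgroup[OF v]] u]) (rule K1[OF v w])
  thus ?thesis by simp
qed

lemma K4:
  assumes v: "v \<in> PN" and w: "w \<in> Orb v" and n: "n \<in> N" and s: "s \<in> Stb v"
  shows "(w \<star> delta n) \<star> delta s = (w \<star> delta s) \<star> delta n"
proof -
  have wP: "w \<in> PN" using w Orb_sub[OF v] by blast
  obtain c where c: "delta n \<star> w = sc c w" using PN_eig[OF wP n] by blast
  have wn: "w \<star> delta n = sc c w" using K3[OF wP n] c by simp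
  have "(w \<star> delta n) \<star> delta s = sc c (w \<star> delta s)"
    unfolding wn by (rule conv_sc_left)
  moreover have "(w \<star> delta s) \<star> delta n = sc c (w \<star> delta s)"
  proof -
    have "(w \<star> delta s) \<star> delta n = (delta s \<star> w) \<star> delta n"
      using K1[OF v w s] by simp
    also have "\<dots> = delta s \<star> (w \<star> delta n)" by (rule conv_assoc)
    also have "\<dots> = sc c (delta s \<star> w)" unfolding wn by (rule conv_sc_right)
    also have "\<dots> = sc c (w \<star> delta s)" using K1[OF v w s] by simp
    finally show ?thesis .
  qed
  ultimately show ?thesis by simp
qed

lemma K5:
  assumes v: "v \<in> PN" and w: "w \<in> Orb v" and n: "n \<in> N" and u: "u \<in> grp_alg (Stb v)"
  shows "(w \<star> delta n) \<star> u = (w \<star> u) \<star> delta n"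
proof -
  have fS: "finite (Stb v)" using sub_finite[OF Stb_subgroup[OF v]] .
  have "(w \<star> delta n) \<star> u = (\<Sum>s\<in>Stb v. sc (u s) ((w \<star> delta n) \<star> delta s))"
    by (subst expand[OF fS u]) (simp add: conv_sum_right conv_sc_right)
  also have "\<dots> = (\<Sum>s\<in>Stb v. sc (u s) ((w \<star> delta s) \<star> delta n))"
    using K4[OF v w n] by simp
  also have "\<dots> = (w \<star> u) \<star> delta n"
    by (subst (2) expand[OF fS u]) (simp add: conv_sum_right conv_sc_right conv_sum_left conv_sc_left)
  finally show ?thesis .
qed

lemma cjH_u: "h \<in> H \<Longrightarrow> u \<in> grp_alg (Stb v) \<Longrightarrow> cj h u = u"
proof -
  assume h: "h \<in> H" and u: "u \<in> grp_alg (Stb v)"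
  have "u \<in> grp_alg H" using u Stb_sub_H by (auto simp: grp_alg_def)
  thus ?thesis using cj_fix_grp_alg[OF Hs abH h] by blast
qed

end


context sdp
begin

lemma U_props:
  assumes v: "v \<in> PN"
  shows "finite (UU v)" "UU v \<subseteq> grp_alg (Stb v)" "0 \<notin> UU v" "\<And>u. u \<in> UU v \<Longrightarrow> u \<star> u = u"
    "(\<Sum>u\<in>UU v. u) = delta \<one>"
  using U_ois[OF v] by (auto simp: ois_def)

lemma J_V: "JJ v u \<in> V"
  unfolding JJ_def V_def by (intro grp_alg_sum) (simp add: conv_V[unfolded V_def])

lemma wu_V: "w \<star> u \<in> V" by (rule conv_V)

lemma decompose:
  assumes "g \<in> carrier G"
  obtains n h where "n \<in> N" "h \<in> H" "g = n \<otimes> h"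
  using assms NHC[symmetric] unfolding set_mult_def by auto

lemma J_N:
  assumes v: "v \<in> PN" and n: "n \<in> N" and u: "u \<in> grp_alg (Stb v)"
  shows "delta n \<star> JJ v u = JJ v u \<star> delta n"
proof -
  have "delta n \<star> (w \<star> u) = (w \<star> u) \<star> delta n" if w: "w \<in> Orb v" for w
  proof -
    have wP: "w \<in> PN" using w Orb_sub[OF v] by blast
    have "delta n \<star> (w \<star> u) = (delta n \<star> w) \<star> u" by (simp add: conv_assoc)
    also have "\<dots> = (w \<star> delta n) \<star> u" using K3[OF wP n] by simp
    also have "\<dots> = (w \<star> u) \<star> delta n" using K5[OF v w n u] .
    finally show ?thesis .
  qed
  thus ?thesis unfolding JJ_def by (simp add: conv_sum_left conv_sum_right)
qed

lemma J_H:
  assumes v: "v \<in> PN" and h: "h \<in> H" and u: "u \<in> grp_alg (Stb v)"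
  shows "delta h \<star> JJ v u = JJ v u \<star> delta h"
proof -
  have hG: "h \<in> carrier G" using HG[OF h] .
  have "delta h \<star> JJ v u = (\<Sum>w\<in>Orb v. delta h \<star> (w \<star> u))" by (simp add: JJ_def conv_sum_right)
  also have "\<dots> = (\<Sum>w\<in>Orb v. (cj h w \<star> u) \<star> delta h)"
  proof (intro sum.cong refl)
    fix w
    have "delta h \<star> (w \<star> u) = cj h (w \<star> u) \<star> delta h" using delta_move[OF hG wu_V] .
    also have "\<dots> = (cj h w \<star> u) \<star> delta h" using cj_mult[OF hG] cjH_u[OF h u] by simp
    finally show "delta h \<star> (w \<star> u) = (cj h w \<star> u) \<star> delta h" .
  qed
  also have "\<dots> = (\<Sum>w\<in>cj h ` Orb v. (w \<star> u) \<star> delta h)"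
    using Orb_perm(2)[OF v h] by (simp add: sum.reindex)
  also have "\<dots> = JJ v u \<star> delta h" using Orb_perm(1)[OF v h] by (simp add: JJ_def conv_sum_left)
  finally show ?thesis .
qed

lemma J_central:
  assumes v: "v \<in> PN" and u: "u \<in> grp_alg (Stb v)" and a: "a \<in> V"
  shows "a \<star> JJ v u = JJ v u \<star> a"
proof (rule commute_from_deltas[OF fin a[unfolded V_def]])
  fix g assume g: "g \<in> carrier G"
  then obtain n h where nh: "n \<in> N" "h \<in> H" "g = n \<otimes> h" by (rule decompose)
  have "delta g = delta n \<star> delta h" using nh NG HG by (simp add: delta_mult)
  hence "delta g \<star> JJ v u = delta n \<star> (delta h \<star> JJ v u)" by (simp add: conv_assoc)
  also have "\<dots> = (delta n \<star> JJ v u) \<star> delta h" using J_H[OF v nh(2) u] by (simp add: conv_assoc)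
  also have "\<dots> = JJ v u \<star> (delta n \<star> delta h)" using J_N[OF v nh(1) u] by (simp add: conv_assoc)
  also have "\<dots> = JJ v u \<star> delta g" using \<open>delta g = _\<close> by simp
  finally show "delta g \<star> JJ v u = JJ v u \<star> delta g" .
qed

lemma J_prod:
  assumes v: "v \<in> PN" and w: "w \<in> Orb v" and w': "w' \<in> Orb v" and u: "u \<in> grp_alg (Stb v)"
  shows "(w \<star> u) \<star> (w' \<star> u') = (w \<star> w') \<star> (u \<star> u')"
  using four[of u w'] K2[OF v w' u] by simp

lemma J_left:
  assumes v: "v \<in> PN" and u: "u \<in> UU v" and w: "w \<in> Orb v"
  shows "JJ v u \<star> (w \<star> u) = w \<star> u"
proof -
  have uS: "u \<in> grp_alg (Stb v)" using U_props(2)[OF v] u by blast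
  have uu: "u \<star> u = u" using U_props(4)[OF v u] .
  have "JJ v u \<star> (w \<star> u) = (\<Sum>w'\<in>Orb v. (w' \<star> w) \<star> u)"
    unfolding JJ_def conv_sum_left using J_prod[OF v _ w uS] uu by simp
  also have "\<dots> = (w \<star> w) \<star> u"
  proof (rule sum_pick[OF Orb_fin w])
    fix x assume x: "x \<in> Orb v" "x \<noteq> w"
    have "x \<star> w = 0" using PN_orth x w Orb_sub[OF v] by blast
    thus "(x \<star> w) \<star> u = 0" by simp
  qed
  also have "\<dots> = w \<star> u" using PN_idem Orb_sub[OF v] w by auto
  finally show ?thesis .
qed

lemma J_idem:
  assumes v: "v \<in> PN" and u: "u \<in> UU v"
  shows "JJ v u \<star> JJ v u = JJ v u"
  using J_left[OF v u] by (simp add: JJ_def[of v u] conv_sum_right)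

lemma wu_val:
  assumes w: "w \<in> grp_alg N" and u: "u \<in> grp_alg H" and n: "n \<in> N" and h: "h \<in> H"
  shows "(w \<star> u) (n \<otimes> h) = w n * u h"
proof -
  have nG: "n \<in> carrier G" and hG: "h \<in> carrier G" using NG[OF n] HG[OF h] .
  have "(w \<star> u) (n \<otimes> h) = (\<Sum>y\<in>carrier G. w y * u (inv y \<otimes> (n \<otimes> h)))"
    using nG hG by (simp add: conv_in)
  also have "\<dots> = w n * u (inv n \<otimes> (n \<otimes> h))"
  proof (rule sum_pick[OF fin nG])
    fix y assume y: "y \<in> carrier G" "y \<noteq> n"
    show "w y * u (inv y \<otimes> (n \<otimes> h)) = 0"
    proof (cases "y \<in> N")
      case False thus ?thesis using w by (simp add: grp_alg_def)
    next
      case True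
      have "inv y \<otimes> (n \<otimes> h) \<notin> H"
      proof
        assume a: "inv y \<otimes> (n \<otimes> h) \<in> H"
        have "inv y \<otimes> (n \<otimes> h) \<otimes> inv h \<in> H"
          using a h Hs by (simp add: subgroup.m_closed subgroup.m_inv_closed)
        moreover have "inv y \<otimes> (n \<otimes> h) \<otimes> inv h = inv y \<otimes> n" using y nG hG
          by (simp add: m_assoc)
        moreover have "inv y \<otimes> n \<in> N" using True n NS
          by (simp add: subgroup.m_closed subgroup.m_inv_closed)
        ultimately have "inv y \<otimes> n \<in> N \<inter> H" by simp
        hence "inv y \<otimes> n = \<one>" using NH1 by blast
        hence "n = y" using y nG by (metis inv_closed inv_equality inv_inv l_inv r_inv
            group.inv_comm is_group)
        thus False using y by simp
      qed
      thus ?thesis using u by (simp add: grp_alg_def)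
    qed
  qed
  also have "\<dots> = w n * u h" using nG hG by (simp add: m_assoc[symmetric])
  finally show ?thesis .
qed

lemma wu_nz:
  assumes v: "v \<in> PN" and w: "w \<in> PN" and u: "u \<in> UU v"
  shows "w \<star> u \<noteq> 0"
proof -
  have uS: "u \<in> grp_alg (Stb v)" using U_props(2)[OF v] u by blast
  have uH: "u \<in> grp_alg H" using uS Stb_sub_H by (auto simp: grp_alg_def)
  have wN: "w \<in> grp_alg N" using PN_K[OF w] .
  obtain n where n: "w n \<noteq> 0" using PN_nz[OF w] by (auto simp: fun_eq_iff)
  hence nN: "n \<in> N" using wN by (auto simp: grp_alg_def)
  have un: "u \<noteq> 0" using U_props(3)[OF v] u by blast
  obtain h where h: "u h \<noteq> 0" using un by (auto simp: fun_eq_iff)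
  hence hH: "h \<in> H" using uH by (auto simp: grp_alg_def)
  have "(w \<star> u) (n \<otimes> h) \<noteq> 0" using wu_val[OF wN uH nN hH] n h by simp
  thus ?thesis by auto
qed

lemma J_nz:
  assumes v: "v \<in> PN" and u: "u \<in> UU v"
  shows "JJ v u \<noteq> 0"
proof
  assume "JJ v u = 0"
  hence "v \<star> u = 0" using J_left[OF v u v_Orb[OF v]] by simp
  thus False using wu_nz[OF v v u] by simp
qed

end


context sdp
begin

lemma stepA:
  assumes v: "v \<in> PN" and u: "u \<in> UU v" and g: "g \<in> carrier G"
  shows "\<exists>l. ((v \<star> delta g) \<star> v) \<star> u = sc l (v \<star> u)"
proof -
  obtain n h where nh: "n \<in> N" "h \<in> H" "g = n \<otimes> h" using g by (rule decompose)
  have nG: "n \<in> carrier G" and hG: "h \<in> carrier G" using NG nh HG by auto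
  obtain c where c: "delta n \<star> v = sc c v" using PN_eig[OF v nh(1)] by blast
  have vg: "v \<star> delta g = sc c (v \<star> delta h)"
  proof -
    have "v \<star> delta g = (v \<star> delta n) \<star> delta h" using nG hG nh by (simp add: delta_mult conv_assoc)
    also have "v \<star> delta n = sc c v" using K3[OF v nh(1)] c by simp
    finally have "v \<star> delta g = sc c v \<star> delta h" .
    thus ?thesis by (simp only: conv_sc_left)
  qed
  have vhv: "(v \<star> delta h) \<star> v = (v \<star> cj h v) \<star> delta h"
  proof -
    have "(v \<star> delta h) \<star> v = v \<star> (delta h \<star> v)" by (rule conv_assoc)
    also have "delta h \<star> v = cj h v \<star> delta h" using delta_move[OF hG PN_V[OF v]] .
    finally show ?thesis by (simp add: conv_assoc)
  qed
  show ?thesis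
  proof (cases "cj h v = v")
    case True
    have hS: "h \<in> Stb v" using Stb_char[OF v nh(2) True] .
    have dS: "delta h \<in> grp_alg (Stb v)" using delta_grp_alg[OF hS] .
    obtain e where e: "delta h \<star> u = sc e u"
      using eigen_all[OF Stb_subgroup[OF v] U_ois[OF v] dS u] by blast
    have "((v \<star> delta g) \<star> v) \<star> u = sc c ((v \<star> v) \<star> (delta h \<star> u))"
      unfolding vg conv_sc_left vhv True by (simp add: conv_assoc)
    also have "\<dots> = sc (c * e) (v \<star> u)" using PN_idem[OF v] e by (simp add: conv_sc_right)
    finally show ?thesis by blast
  next
    case False
    have "v \<star> cj h v = 0" using PN_orth[OF v PN_cj[OF hG v]] False by metis
    hence "((v \<star> delta g) \<star> v) \<star> u = sc 0 (v \<star> u)"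
      unfolding vg conv_sc_left vhv by simp
    thus ?thesis by blast
  qed
qed

lemma J_scalar:
  assumes v: "v \<in> PN" and u: "u \<in> UU v" and z: "z \<in> V" and zc: "\<forall>a\<in>V. a \<star> z = z \<star> a"
  shows "\<exists>\<mu>. z \<star> JJ v u = sc \<mu> (JJ v u)"
proof -
  have uS: "u \<in> grp_alg (Stb v)" using U_props(2)[OF v] u by blast
  have "\<forall>g\<in>carrier G. \<exists>l. ((v \<star> delta g) \<star> v) \<star> u = sc l (v \<star> u)" using stepA[OF v u] by blast
  then obtain l where l: "\<forall>g\<in>carrier G. ((v \<star> delta g) \<star> v) \<star> u = sc (l g) (v \<star> u)" by metis
  define \<mu> where "\<mu> = (\<Sum>g\<in>carrier G. z g * l g)"
  have B: "z \<star> (v \<star> u) = sc \<mu> (v \<star> u)"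
  proof -
    have zv1: "z \<star> v = (z \<star> v) \<star> v" using PN_idem[OF v] by (simp add: conv_assoc)
    have zv2: "z \<star> v = v \<star> z" using zc PN_V[OF v] by simp
    have zv: "z \<star> v = (v \<star> z) \<star> v" by (subst zv2[symmetric]) (rule zv1)
    have "z \<star> (v \<star> u) = ((v \<star> z) \<star> v) \<star> u" by (simp add: conv_assoc[symmetric] zv)
    also have "\<dots> = (\<Sum>g\<in>carrier G. sc (z g) (((v \<star> delta g) \<star> v) \<star> u))"
      by (subst expand[OF fin z[unfolded V_def]])
        (simp add: conv_sum_right conv_sum_left conv_sc_left conv_sc_right)
    also have "\<dots> = (\<Sum>g\<in>carrier G. sc (z g * l g) (v \<star> u))" using l by simp
    also have "\<dots> = sc \<mu> (v \<star> u)" by (simp add: sum_sc \<mu>_def)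
    finally show ?thesis .
  qed
  have C: "z \<star> (w \<star> u) = sc \<mu> (w \<star> u)" if w: "w \<in> Orb v" for w
  proof -
    obtain h where h: "h \<in> H" "w = cj h v" using w by (auto simp: conj_orbit_def)
    have hG: "h \<in> carrier G" using HG[OF h(1)] .
    have wu: "w \<star> u = cj h (v \<star> u)" using h cj_mult[OF hG] cjH_u[OF h(1) uS] by simp
    have cz: "cj h z = z"
    proof -
      have "cj h z = (z \<star> delta h) \<star> delta (inv h)"
        using zc delta_grp_alg[OF hG] by (simp add: cj_def V_def)
      also have "\<dots> = z" using hG z by (simp add: conv_assoc delta_inv_r conv_one_right)
      finally show ?thesis .
    qed
    have "z \<star> (w \<star> u) = cj h (z \<star> (v \<star> u))" unfolding wu cj_mult[OF hG] cz ..
    also have "\<dots> = sc \<mu> (w \<star> u)" unfolding B cj_sc wu ..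
    finally show ?thesis .
  qed
  have "z \<star> JJ v u = sc \<mu> (JJ v u)"
    unfolding JJ_def conv_sum_right sc_sum using C by simp
  thus ?thesis by blast
qed

lemma sc_idem_cases:
  assumes J: "J \<noteq> 0" and JJ: "J \<star> J = J" and eq: "sc \<mu> J \<star> sc \<mu> J = sc \<mu> J"
  shows "\<mu> = 0 \<or> \<mu> = 1"
proof -
  have "sc (\<mu> * \<mu>) J = sc \<mu> J" using eq JJ by (simp add: conv_sc_left conv_sc_right)
  hence "\<mu> * \<mu> = \<mu>" by (rule sc_cancel[OF J])
  hence "\<mu> * (\<mu> - 1) = 0" by (simp add: right_diff_distrib)
  thus ?thesis by simp
qed

lemma central_idem_iff:
  "central_idem G J \<longleftrightarrow> J \<in> V \<and> J \<star> J = J \<and> (\<forall>a\<in>V. a \<star> J = J \<star> a)"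
  by (simp add: central_idem_def V_def)

lemma J_prim:
  assumes v: "v \<in> PN" and u: "u \<in> UU v"
  shows "primitive_central_idem G (JJ v u)"
proof -
  have uS: "u \<in> grp_alg (Stb v)" using U_props(2)[OF v] u by blast
  let ?J = "JJ v u"
  have ci: "central_idem G ?J" unfolding central_idem_iff
    using J_V J_idem[OF v u] J_central[OF v uS] by blast
  have nz: "?J \<noteq> (\<lambda>_. 0)" using J_nz[OF v u] by (simp add: zero_fun_def)
  have "\<not> (\<exists>I1 I2. central_idem G I1 \<and> central_idem G I2 \<and> I1 \<noteq> (\<lambda>_. 0) \<and> I2 \<noteq> (\<lambda>_. 0)
            \<and> conv G I1 I2 = (\<lambda>_. 0) \<and> conv G I2 I1 = (\<lambda>_. 0)
            \<and> ?J = (\<lambda>x. I1 x + I2 x))"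
  proof
    assume "\<exists>I1 I2. central_idem G I1 \<and> central_idem G I2 \<and> I1 \<noteq> (\<lambda>_. 0) \<and> I2 \<noteq> (\<lambda>_. 0)
            \<and> conv G I1 I2 = (\<lambda>_. 0) \<and> conv G I2 I1 = (\<lambda>_. 0)
            \<and> ?J = (\<lambda>x. I1 x + I2 x)"
    then obtain I1 I2 where c1: "central_idem G I1" and c2: "central_idem G I2"
      and n1: "I1 \<noteq> 0" and n2: "I2 \<noteq> 0" and o12: "I1 \<star> I2 = 0"
      and Jeq: "?J = I1 + I2"
      by (auto simp: zero_fun_def plus_fun_def)
    have I1: "I1 \<in> V" "I1 \<star> I1 = I1" "\<forall>a\<in>V. a \<star> I1 = I1 \<star> a" using c1 central_idem_iff by auto
    obtain \<mu> where mu: "I1 \<star> ?J = sc \<mu> ?J" using J_scalar[OF v u I1(1) I1(3)] by blast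
    have "I1 \<star> ?J = I1" unfolding Jeq conv_add_right I1(2) o12 by simp
    hence I1J: "I1 = sc \<mu> ?J" using mu by simp
    have "\<mu> = 0 \<or> \<mu> = 1"
      using sc_idem_cases[OF J_nz[OF v u] J_idem[OF v u]] I1(2) I1J by simp
    thus False
    proof
      assume "\<mu> = 0" thus False using I1J n1 by simp
    next
      assume "\<mu> = 1"
      hence "I1 = ?J" using I1J by simp
      hence "I2 = 0" using Jeq by (simp add: fun_eq_iff)
      thus False using n2 by simp
    qed
  qed
  thus ?thesis unfolding primitive_central_idem_def using ci nz by blast
qed

lemma prim_is_J:
  assumes P: "primitive_central_idem G Pp"
  shows "\<exists>v\<in>PN. \<exists>u\<in>UU v. Pp = JJ v u"
proof -
  have ci: "central_idem G Pp" and pnz: "Pp \<noteq> 0"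
    using P by (auto simp: primitive_central_idem_def zero_fun_def)
  have PV: "Pp \<in> V" and PP: "Pp \<star> Pp = Pp" and Pc: "\<forall>a\<in>V. a \<star> Pp = Pp \<star> a"
    using ci central_idem_iff by auto
  have "Pp = Pp \<star> delta \<one>" using PV by (simp add: conv_one_right)
  also have "\<dots> = (\<Sum>w\<in>PN. Pp \<star> w)" by (simp add: PN_sum[symmetric] conv_sum_right)
  finally have "(\<Sum>w\<in>PN. Pp \<star> w) \<noteq> 0" using pnz by simp
  then obtain v where v: "v \<in> PN" and pv: "Pp \<star> v \<noteq> 0" using sum_zero_exists by blast
  have "Pp \<star> v = (Pp \<star> v) \<star> delta \<one>" using conv_V by (simp add: conv_one_right)
  also have "\<dots> = (\<Sum>u\<in>UU v. (Pp \<star> v) \<star> u)" by (simp add: U_props(5)[OF v, symmetric] conv_sum_right)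
  finally have "(\<Sum>u\<in>UU v. (Pp \<star> v) \<star> u) \<noteq> 0" using pv by simp
  then obtain u where u: "u \<in> UU v" and pvu: "(Pp \<star> v) \<star> u \<noteq> 0" using sum_zero_exists by blast
  let ?J = "JJ v u"
  obtain \<mu> where mu: "Pp \<star> ?J = sc \<mu> ?J" using J_scalar[OF v u PV Pc] by blast
  have jl: "?J \<star> (v \<star> u) = v \<star> u" using J_left[OF v u v_Orb[OF v]] .
  have "(Pp \<star> v) \<star> u = (Pp \<star> ?J) \<star> (v \<star> u)" by (simp add: conv_assoc jl)
  also have "\<dots> = sc \<mu> (v \<star> u)" by (simp only: mu conv_sc_left jl)
  finally have mu0: "\<mu> \<noteq> 0" using pvu by auto
  have JPc: "?J \<star> Pp = Pp \<star> ?J" using Pc J_V by simp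
  have "(Pp \<star> ?J) \<star> (Pp \<star> ?J) = (Pp \<star> Pp) \<star> (?J \<star> ?J)" using four[OF JPc[symmetric]] by simp
  also have "\<dots> = Pp \<star> ?J" using PP J_idem[OF v u] by simp
  finally have "sc \<mu> ?J \<star> sc \<mu> ?J = sc \<mu> ?J" using mu by simp
  hence "\<mu> = 1" using sc_idem_cases[OF J_nz[OF v u] J_idem[OF v u]] mu0 by blast
  hence PJ: "Pp \<star> ?J = ?J" using mu by simp
  define I2 where "I2 = Pp - ?J"
  have I2V: "I2 \<in> V" unfolding I2_def V_def using PV J_V by (simp add: V_def grp_alg_diff)
  have I2I2: "I2 \<star> I2 = I2"
    unfolding I2_def conv_diff_left conv_diff_right PP PJ JPc J_idem[OF v u] by simp
  have I2c: "\<forall>a\<in>V. a \<star> I2 = I2 \<star> a"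
    unfolding I2_def conv_diff_left conv_diff_right using Pc J_central[OF v] U_props(2)[OF v] u by auto
  have o1: "?J \<star> I2 = 0" unfolding I2_def conv_diff_right JPc PJ J_idem[OF v u] by simp
  have o2: "I2 \<star> ?J = 0" unfolding I2_def conv_diff_left PJ J_idem[OF v u] by simp
  have ciJ: "central_idem G ?J" using J_prim[OF v u] by (simp add: primitive_central_idem_def)
  have ciI2: "central_idem G I2" using central_idem_iff I2V I2I2 I2c by blast
  have sumeq: "Pp = (\<lambda>x. ?J x + I2 x)" by (simp add: I2_def fun_eq_iff)
  have Jnz: "?J \<noteq> (\<lambda>_. 0)" using J_nz[OF v u] by (simp add: zero_fun_def)
  have "I2 = (\<lambda>_. 0)"
  proof (rule ccontr)
    assume "I2 \<noteq> (\<lambda>_. 0)"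
    thus False using P ciJ ciI2 Jnz o1 o2 sumeq unfolding primitive_central_idem_def
      by (auto simp: zero_fun_def)
  qed
  hence "Pp = ?J" using sumeq by simp
  thus ?thesis using v u by blast
qed

end

theorem mainTheorem8:
  fixes G :: "('a, 'b) monoid_scheme" and N H :: "'a set"
  assumes "group G" and "finite (carrier G)"
    and "N \<lhd> G" and "subgroup H G"
    and "N \<inter> H = {\<one>\<^bsub>G\<^esub>}" and "N <#>\<^bsub>G\<^esub> H = carrier G"
    and "\<forall>x\<in>N. \<forall>y\<in>N. x \<otimes>\<^bsub>G\<^esub> y = y \<otimes>\<^bsub>G\<^esub> x"
    and "\<forall>x\<in>H. \<forall>y\<in>H. x \<otimes>\<^bsub>G\<^esub> y = y \<otimes>\<^bsub>G\<^esub> x"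
  shows "{(\<lambda>x. \<Sum>v\<in>Orb. conv G v u x) | Orb u.
            Orb \<in> conj_orbits G N H \<and> u \<in> idem_eigenbasis G (orbit_stab G H Orb)}
         = {J. primitive_central_idem G J}"
proof -
  interpret galg G using assms(1,2) by (simp add: galg_def galg_axioms_def)
  have gal: "galg G" using assms(1,2) by (simp add: galg_def galg_axioms_def)
  have "sdp G N H"
    by (rule sdp.intro[OF gal], rule sdp_axioms.intro) (use assms in \<open>auto simp: abel_def\<close>)
  then interpret sdp G N H .
  have fe: "(\<lambda>x. \<Sum>w\<in>Orb v. conv G w u x) = JJ v u" for v u
    by (simp add: JJ_def sum_fun_apply fun_eq_iff)
  show ?thesis
  proof
    show "{(\<lambda>x. \<Sum>v\<in>Orb. conv G v u x) | Orb u.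
            Orb \<in> conj_orbits G N H \<and> u \<in> idem_eigenbasis G (orbit_stab G H Orb)}
         \<subseteq> {J. primitive_central_idem G J}"
    proof
      fix J assume "J \<in> {(\<lambda>x. \<Sum>v\<in>Orb. conv G v u x) | Orb u.
            Orb \<in> conj_orbits G N H \<and> u \<in> idem_eigenbasis G (orbit_stab G H Orb)}"
      then obtain Ob u where J: "J = (\<lambda>x. \<Sum>v\<in>Ob. conv G v u x)" and Ob: "Ob \<in> conj_orbits G N H"
        and u: "u \<in> idem_eigenbasis G (orbit_stab G H Ob)" by blast
      obtain v where v: "v \<in> PN" "Ob = Orb v" using Ob by (auto simp: conj_orbits_def)
      have "J = JJ v u" using J fe v by simp
      thus "J \<in> {J. primitive_central_idem G J}" using J_prim[OF v(1)] u v by simp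
    qed
  next
    show "{J. primitive_central_idem G J} \<subseteq> {(\<lambda>x. \<Sum>v\<in>Orb. conv G v u x) | Orb u.
            Orb \<in> conj_orbits G N H \<and> u \<in> idem_eigenbasis G (orbit_stab G H Orb)}"
    proof
      fix J assume "J \<in> {J. primitive_central_idem G J}"
      then obtain v u where v: "v \<in> PN" and u: "u \<in> UU v" and J: "J = JJ v u"
        using prim_is_J by blast
      have "Orb v \<in> conj_orbits G N H" using v by (simp add: conj_orbits_def)
      moreover have "J = (\<lambda>x. \<Sum>w\<in>Orb v. conv G w u x)" using J fe by simp
      ultimately show "J \<in> {(\<lambda>x. \<Sum>v\<in>Orb. conv G v u x) | Orb u.
            Orb \<in> conj_orbits G N H \<and> u \<in> idem_eigenbasis G (orbit_stab G H Orb)}"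
        using u by blast
    qed
  qed
qed


end
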